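(* Let $N\ge1$, $i\in\langle N\rangle$ and let $u$ be a word over $\langle N\rangle$ with $|u|\ge 2$. Then the antipode of the interval partition Hopf algebra $\mathcal H^N$ satisfies \[ S_{\mathcal H}(Y_u^i)=\sum_{T\in \mathbf{RT}_u^i}(-1)^{\mathbf v(T)}\,\Lambda_{\uparrow r}(T). \]
   Context: Let $\langle N\rangle=\{1,\dots,N\}$. For a word $u=u(1)\cdots u(p)$ over $\langle N\rangle$ write $|u|=p$. The interval partition Hopf algebra $\mathcal H=\mathcal H^N$ is, as an algebra, the free unital associative complex algebra on generators $Y_u^i$ ($i\in\langle N\rangle$, $|u|\ge 2$); one sets $Y_j^i=\delta_{ij}1$ for single letters $i,j$. Its counit $\varepsilon$ is the algebra homomorphism with $\varepsilon(Y_u^i)=0$, and its comultiplication is the algebra homomorphism $\Delta$ with $\Delta(Y_u^i)=\sum_{q=1}^{p}\sum_{(C_1,\dots,C_q)}\sum_{v\in\langle N\rangle^q} Y_{u|C_1}^{v(1)}\cdots Y_{u|C_q}^{v(q)}\otimes Y_v^i$, where $p=|u|$, the middle sum is over all partitions of $\{1,\dots,p\}$ into $q$ nonempty consecutive intervals $C_1<\dots<C_q$, and $u|C_k$ is the subword of $u$ indexed by $C_k$. It is a connected graded bialgebra with antipode $S_{\mathcal H}$. Trees: a colored planar tree is a finite rooted tree in which the children of each vertex are linearly ordered (left to right) and each vertex $x$ has a color $c(x)\in\langle N\rangle$, up to isomorphism preserving root, child orders and colors. A leaf has no children. A tree is reduced if every non-leaf vertex has at least two children. $\mathbf{RT}_u^i$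 is the set of reduced colored planar trees whose root has color $i$ and whose leaves, read left to right, have colors $u(1),\dots,u(p)$. For a non-leaf vertex $x$ with children $y_1<\dots<y_k$, $Y(x)=Y^{c(x)}_{c(y_1)\cdots c(y_k)}$. $\mathbf v(T)$ is the number of non-leaf vertices. $\Lambda_{\uparrow r}(T)=Y(y_1)\cdots Y(y_r)$ where $y_1,\dots,y_r$ are the non-leaf vertices in the order $\prec_r$ defined by: $x\prec_r y$ iff either $y$ is a proper ancestor of $x$, or, letting $z$ be the nearest common ancestor of $x$ and $y$, the child of $z$ on the path to $x$ lies to the right of the child of $z$ on the path to $y$ (equivalently: postorder with children visited from right to left; the root comes last). *)

theory Defs
  imports Complex_Main "HOL-Library.Poly_Mapping"
begin

text \<open>A generator Y_u^i is encoded as the pair (i, u).  A monomial (word in the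
generators) is a list of generators; the empty list is the unit 1.  An element of the
free associative complex algebra is a finitely supported map from monomials to complex
numbers.  The tensor square is modelled by finitely supported maps on pairs of monomials.\<close>

type_synonym gen = "nat \<times> nat list"
type_synonym mon = "gen list"
type_synonym hel = "mon \<Rightarrow>\<^sub>0 complex"
type_synonym hhel = "(mon \<times> mon) \<Rightarrow>\<^sub>0 complex"

definition hscale :: "complex \<Rightarrow> hel \<Rightarrow> hel" where
  "hscale c x = Poly_Mapping.map (\<lambda>v. c * v) x"

definition hhscale :: "complex \<Rightarrow> hhel \<Rightarrow> hhel" where
  "hhscale c x = Poly_Mapping.map (\<lambda>v. c * v) x"

definition hone :: hel where
  "hone = Poly_Mapping.single [] 1"

definition hmult :: "hel \<Rightarrow> hel \<Rightarrow> hel" where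
  "hmult x y = (\<Sum>a\<in>Poly_Mapping.keys x. \<Sum>b\<in>Poly_Mapping.keys y.
      Poly_Mapping.single (a @ b) (Poly_Mapping.lookup x a * Poly_Mapping.lookup y b))"

definition hprod :: "hel list \<Rightarrow> hel" where
  "hprod xs = foldr hmult xs hone"

definition tens :: "hel \<Rightarrow> hel \<Rightarrow> hhel" where
  "tens x y = (\<Sum>a\<in>Poly_Mapping.keys x. \<Sum>b\<in>Poly_Mapping.keys y.
      Poly_Mapping.single (a, b) (Poly_Mapping.lookup x a * Poly_Mapping.lookup y b))"

definition hhone :: hhel where
  "hhone = Poly_Mapping.single ([], []) 1"

definition hhmult :: "hhel \<Rightarrow> hhel \<Rightarrow> hhel" where
  "hhmult x y = (\<Sum>p\<in>Poly_Mapping.keys x. \<Sum>q\<in>Poly_Mapping.keys y.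
      Poly_Mapping.single (fst p @ fst q, snd p @ snd q) (Poly_Mapping.lookup x p * Poly_Mapping.lookup y q))"

definition hhprod :: "hhel list \<Rightarrow> hhel" where
  "hhprod xs = foldr hhmult xs hhone"

text \<open>Y_u^i, with the convention Y_j^i = delta_ij 1 for single letters.\<close>

definition Y :: "nat \<Rightarrow> nat list \<Rightarrow> hel" where
  "Y i u = (if length u = 1 then (if u = [i] then hone else 0)
            else Poly_Mapping.single [(i, u)] 1)"

definition valid_gen :: "nat \<Rightarrow> gen \<Rightarrow> bool" where
  "valid_gen N g \<longleftrightarrow> fst g \<in> {1..N} \<and> 2 \<le> length (snd g) \<and> set (snd g) \<subseteq> {1..N}"

definition valid_mon :: "nat \<Rightarrow> mon \<Rightarrow> bool" where
  "valid_mon N m \<longleftrightarrow> (\<forall>g\<in>set m. valid_gen N g)"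

definition Hcarrier :: "nat \<Rightarrow> hel set" where
  "Hcarrier N = {x. \<forall>m\<in>Poly_Mapping.keys x. valid_mon N m}"

text \<open>Partitions of a word into consecutive nonempty intervals, given as the list of
subwords u|C_1, ..., u|C_q (in order).\<close>

definition interval_splits :: "'a list \<Rightarrow> 'a list list set" where
  "interval_splits u = {cs. concat cs = u \<and> (\<forall>c\<in>set cs. c \<noteq> [])}"

definition words :: "nat \<Rightarrow> nat \<Rightarrow> nat list set" where
  "words N q = {v. length v = q \<and> set v \<subseteq> {1..N}}"

definition Delta_gen :: "nat \<Rightarrow> gen \<Rightarrow> hhel" where
  "Delta_gen N g = (\<Sum>cs\<in>interval_splits (snd g). \<Sum>v\<in>words N (length cs).
      tens (hprod (map (\<lambda>k. Y (v ! k) (cs ! k)) [0..<length cs])) (Y (fst g) v))"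

definition Delta_mon :: "nat \<Rightarrow> mon \<Rightarrow> hhel" where
  "Delta_mon N m = hhprod (map (Delta_gen N) m)"

definition Delta :: "nat \<Rightarrow> hel \<Rightarrow> hhel" where
  "Delta N x = (\<Sum>m\<in>Poly_Mapping.keys x. hhscale (Poly_Mapping.lookup x m) (Delta_mon N m))"

text \<open>Counit: the algebra homomorphism killing all generators, i.e. the coefficient of 1.\<close>

definition eps :: "hel \<Rightarrow> complex" where
  "eps x = Poly_Mapping.lookup x []"

text \<open>For a linear map S, m o (S (x) id) o Delta and m o (id (x) S) o Delta.\<close>

definition conv_left :: "nat \<Rightarrow> (hel \<Rightarrow> hel) \<Rightarrow> hel \<Rightarrow> hel" where
  "conv_left N S x = (\<Sum>p\<in>Poly_Mapping.keys (Delta N x).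
      hscale (Poly_Mapping.lookup (Delta N x) p) (hmult (S (Poly_Mapping.single (fst p) 1))
                                         (Poly_Mapping.single (snd p) 1)))"

definition conv_right :: "nat \<Rightarrow> (hel \<Rightarrow> hel) \<Rightarrow> hel \<Rightarrow> hel" where
  "conv_right N S x = (\<Sum>p\<in>Poly_Mapping.keys (Delta N x).
      hscale (Poly_Mapping.lookup (Delta N x) p) (hmult (Poly_Mapping.single (fst p) 1)
                                         (S (Poly_Mapping.single (snd p) 1))))"

definition is_linear :: "(hel \<Rightarrow> hel) \<Rightarrow> bool" where
  "is_linear S \<longleftrightarrow> (\<forall>x. S x = (\<Sum>m\<in>Poly_Mapping.keys x. hscale (Poly_Mapping.lookup x m) (S (Poly_Mapping.single m 1))))"

text \<open>The antipode of H^N: the unique linear endomorphism of H^N (extended by 0 on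
monomials not in H^N) with m(S (x) id)Delta = m(id (x) S)Delta = eta eps.\<close>

definition antipode :: "nat \<Rightarrow> hel \<Rightarrow> hel" where
  "antipode N = (THE S. is_linear S
      \<and> (\<forall>m. \<not> valid_mon N m \<longrightarrow> S (Poly_Mapping.single m 1) = 0)
      \<and> (\<forall>x\<in>Hcarrier N. conv_left N S x = hscale (eps x) hone)
      \<and> (\<forall>x\<in>Hcarrier N. conv_right N S x = hscale (eps x) hone))"

text \<open>Node c ts: a vertex of color c whose children (left to right) are ts.  Planar
isomorphism classes correspond exactly to elements of this datatype.\<close>

datatype ctree = Node nat "ctree list"

fun root_color :: "ctree \<Rightarrow> nat" where
  "root_color (Node c ts) = c"

fun colors :: "ctree \<Rightarrow> nat set" where
  "colors (Node c ts) = insert c (\<Union>t\<in>set ts. colors t)"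

fun reduced :: "ctree \<Rightarrow> bool" where
  "reduced (Node c ts) = ((ts = [] \<or> 2 \<le> length ts) \<and> (\<forall>t\<in>set ts. reduced t))"

fun leaf_word :: "ctree \<Rightarrow> nat list" where
  "leaf_word (Node c ts) = (if ts = [] then [c] else concat (map leaf_word ts))"

fun nvert :: "ctree \<Rightarrow> nat" where
  "nvert (Node c ts) = (if ts = [] then 0 else Suc (sum_list (map nvert ts)))"

text \<open>Non-leaf vertices in the order prec_r (postorder, children visited right to left,
root last), each recorded as (color, word of children colors), i.e. Y(x).\<close>

fun inner_r :: "ctree \<Rightarrow> (nat \<times> nat list) list" where
  "inner_r (Node c ts) = (if ts = [] then []
     else concat (map inner_r (rev ts)) @ [(c, map root_color ts)])"

definition Lambda_r :: "ctree \<Rightarrow> hel" where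
  "Lambda_r T = hprod (map (\<lambda>(c, w). Y c w) (inner_r T))"

definition RT :: "nat \<Rightarrow> nat \<Rightarrow> nat list \<Rightarrow> ctree set" where
  "RT N i u = {T. reduced T \<and> colors T \<subseteq> {1..N} \<and> root_color T = i \<and> leaf_word T = u}"

end

theory Submission
  imports Defs
begin


definition sc :: "complex \<Rightarrow> ('k \<Rightarrow>\<^sub>0 complex) \<Rightarrow> ('k \<Rightarrow>\<^sub>0 complex)" where
  "sc c x = Poly_Mapping.map (\<lambda>v. c * v) x"

lemma lookup_sc [simp]: "Poly_Mapping.lookup (sc c x) k = c * Poly_Mapping.lookup x k"
  unfolding sc_def by transfer (simp add: when_def)

lemma sc_eqI: "(\<And>k. Poly_Mapping.lookup a k = Poly_Mapping.lookup b k) \<Longrightarrow> a = b"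
  by (rule poly_mapping_eqI)

lemma sc_add [simp]: "sc c (x + y) = sc c x + sc c y"
  by (rule poly_mapping_eqI) (simp add: lookup_add algebra_simps)
lemma sc_add_left: "sc (c + d) x = sc c x + sc d x"
  by (rule poly_mapping_eqI) (simp add: lookup_add algebra_simps)
lemma sc_zero [simp]: "sc c 0 = 0"
  by (rule poly_mapping_eqI) simp
lemma sc_0 [simp]: "sc 0 x = 0"
  by (rule poly_mapping_eqI) simp
lemma sc_1 [simp]: "sc 1 x = x"
  by (rule poly_mapping_eqI) simp
lemma sc_sc [simp]: "sc c (sc d x) = sc (c * d) x"
  by (rule poly_mapping_eqI) simp
lemma sc_single [simp]: "sc c (Poly_Mapping.single k d) = Poly_Mapping.single k (c * d)"
  by (rule poly_mapping_eqI) (simp add: lookup_single when_def)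
lemma sc_sum: "sc c (sum f A) = (\<Sum>a\<in>A. sc c (f a))"
  by (induction A rule: infinite_finite_induct) auto
lemma sc_uminus: "sc c (- x) = - sc c x"
  by (rule poly_mapping_eqI) simp
lemma sc_diff: "sc c (x - y) = sc c x - sc c y"
  by (rule poly_mapping_eqI) (simp add: lookup_minus algebra_simps)
lemma sc_neg1: "sc (-1) x = - x"
  by (rule poly_mapping_eqI) simp
lemma sc_sum_left: "sc (sum f A) x = (\<Sum>a\<in>A. sc (f a) x)"
  by (induction A rule: infinite_finite_induct) (auto simp: sc_add_left)

lemma hscale_sc: "hscale = sc"
  by (rule ext)+ (simp add: hscale_def sc_def)
lemma hhscale_sc: "hhscale = sc"
  by (rule ext)+ (simp add: hhscale_def sc_def)

definition ext :: "('k \<Rightarrow> ('l \<Rightarrow>\<^sub>0 complex)) \<Rightarrow> ('k \<Rightarrow>\<^sub>0 complex) \<Rightarrow> ('l \<Rightarrow>\<^sub>0 complex)" where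
  "ext f x = (\<Sum>k\<in>Poly_Mapping.keys x. sc (Poly_Mapping.lookup x k) (f k))"

lemma ext_superset:
  assumes "finite K" "Poly_Mapping.keys x \<subseteq> K"
  shows "ext f x = (\<Sum>k\<in>K. sc (Poly_Mapping.lookup x k) (f k))"
  unfolding ext_def
  by (rule sum.mono_neutral_left) (use assms in \<open>auto simp: in_keys_iff\<close>)

lemma ext_add [simp]: "ext f (x + y) = ext f x + ext f y"
proof -
  let ?K = "Poly_Mapping.keys x \<union> Poly_Mapping.keys y"
  have k: "Poly_Mapping.keys (x + y) \<subseteq> ?K" by (rule keys_add)
  show ?thesis
    by (subst (1 2 3) ext_superset[of ?K]) (auto simp: k lookup_add sc_add_left sum.distrib)
qed

lemma ext_zero [simp]: "ext f 0 = 0"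
  by (simp add: ext_def)

lemma ext_single [simp]: "ext f (Poly_Mapping.single k c) = sc c (f k)"
  by (cases "c = 0") (auto simp: ext_def)

lemma ext_sc [simp]: "ext f (sc c x) = sc c (ext f x)"
  by (subst (1 2) ext_superset[of "Poly_Mapping.keys x"]) (auto simp: in_keys_iff sc_sum mult.commute)

lemma ext_sum [simp]: "ext f (sum g A) = (\<Sum>a\<in>A. ext f (g a))"
  by (induction A rule: infinite_finite_induct) auto

lemma ext_uminus [simp]: "ext f (- x) = - ext f x"
  by (metis ext_sc sc_neg1)

lemma ext_diff [simp]: "ext f (x - y) = ext f x - ext f y"
  by (metis ext_add ext_uminus diff_conv_add_uminus)

lemma ext_cong: "(\<And>k. k \<in> Poly_Mapping.keys x \<Longrightarrow> f k = g k) \<Longrightarrow> ext f x = ext g x"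
  by (simp add: ext_def)

lemma ext_fadd: "ext (\<lambda>k. f k + g k) x = ext f x + ext g x"
  by (simp add: ext_def sum.distrib)
lemma ext_fzero [simp]: "ext (\<lambda>k. 0) x = 0"
  by (simp add: ext_def)
lemma ext_fsc: "ext (\<lambda>k. sc c (f k)) x = sc c (ext f x)"
  by (simp add: ext_def sc_sum mult.commute)
lemma ext_fsum: "ext (\<lambda>k. \<Sum>j\<in>J. f j k) x = (\<Sum>j\<in>J. ext (f j) x)"
  by (simp add: ext_def sc_sum sum.swap[of _ J])
lemma ext_fuminus: "ext (\<lambda>k. - f k) x = - ext f x"
  by (simp add: ext_def sc_uminus sum_negf)
lemma ext_fdiff: "ext (\<lambda>k. f k - g k) x = ext f x - ext g x"
  by (simp add: ext_def sc_diff sum_subtractf)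

lemma poly_mapping_sum_singles:
  "x = (\<Sum>k\<in>Poly_Mapping.keys x. Poly_Mapping.single k (Poly_Mapping.lookup x k))"
  by (rule poly_mapping_eqI) (simp add: lookup_sum lookup_single when_def in_keys_iff)

lemma ext_id [simp]: "ext (\<lambda>k. Poly_Mapping.single k 1) x = x"
  unfolding ext_def by (simp, rule poly_mapping_sum_singles[symmetric])

lemma ext_ext: "ext f (ext g x) = ext (\<lambda>k. ext f (g k)) x"
  unfolding ext_def[of g] by (simp add: ext_def[of _ x])

lemma ext_swap: "ext (\<lambda>a. ext (\<lambda>b. G a b) y) x = ext (\<lambda>b. ext (\<lambda>a. G a b) x) y"
  by (simp add: ext_def sc_sum sum.swap[of _ "Poly_Mapping.keys x"] mult.commute)

lemma keys_sc: "Poly_Mapping.keys (sc c x) \<subseteq> Poly_Mapping.keys x"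
  by (auto simp: in_keys_iff)

lemma keys_sum_sub: "Poly_Mapping.keys (sum f A) \<subseteq> (\<Union>a\<in>A. Poly_Mapping.keys (f a))"
  by (induction A rule: infinite_finite_induct) (auto dest: subsetD[OF keys_add])

lemma keys_ext: "Poly_Mapping.keys (ext f x) \<subseteq> (\<Union>k\<in>Poly_Mapping.keys x. Poly_Mapping.keys (f k))"
  unfolding ext_def using keys_sum_sub keys_sc by fastforce

lemma lookup_ext: "Poly_Mapping.lookup (ext f x) l = (\<Sum>k\<in>Poly_Mapping.keys x. Poly_Mapping.lookup x k * Poly_Mapping.lookup (f k) l)"
  by (simp add: ext_def lookup_sum)

definition gbin :: "('a \<Rightarrow> 'b \<Rightarrow> 'c) \<Rightarrow> ('a \<Rightarrow>\<^sub>0 complex) \<Rightarrow> ('b \<Rightarrow>\<^sub>0 complex) \<Rightarrow> ('c \<Rightarrow>\<^sub>0 complex)" where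
  "gbin op x y = ext (\<lambda>a. ext (\<lambda>b. Poly_Mapping.single (op a b) 1) y) x"

lemma gbin_ext_left: "gbin op (ext f x) y = ext (\<lambda>k. gbin op (f k) y) x"
  by (simp add: gbin_def ext_ext)

lemma gbin_ext_right: "gbin op x (ext f y) = ext (\<lambda>k. gbin op x (f k)) y"
  unfolding gbin_def ext_ext by (rule ext_swap)

lemma gbin_single [simp]:
  "gbin op (Poly_Mapping.single a c) (Poly_Mapping.single b d) = Poly_Mapping.single (op a b) (c * d)"
  by (simp add: gbin_def mult.commute)

lemma gbin_single_left: "gbin op (Poly_Mapping.single a 1) y = ext (\<lambda>b. Poly_Mapping.single (op a b) 1) y"
  by (simp add: gbin_def)

lemma gbin_add_left [simp]: "gbin op (x + x') y = gbin op x y + gbin op x' y"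
  by (simp add: gbin_def)
lemma gbin_add_right [simp]: "gbin op x (y + y') = gbin op x y + gbin op x y'"
  by (simp add: gbin_def ext_fadd)
lemma gbin_zero_left [simp]: "gbin op 0 y = 0"
  by (simp add: gbin_def)
lemma gbin_zero_right [simp]: "gbin op x 0 = 0"
  by (simp add: gbin_def)
lemma gbin_sc_left [simp]: "gbin op (sc c x) y = sc c (gbin op x y)"
  by (simp add: gbin_def)
lemma gbin_sc_right [simp]: "gbin op x (sc c y) = sc c (gbin op x y)"
  by (simp add: gbin_def ext_fsc)
lemma gbin_sum_left: "gbin op (sum f A) y = (\<Sum>a\<in>A. gbin op (f a) y)"
  by (simp add: gbin_def)
lemma gbin_sum_right: "gbin op x (sum f A) = (\<Sum>a\<in>A. gbin op x (f a))"
  by (simp add: gbin_def ext_fsum)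
lemma gbin_uminus_left [simp]: "gbin op (- x) y = - gbin op x y"
  by (simp add: gbin_def)
lemma gbin_uminus_right [simp]: "gbin op x (- y) = - gbin op x y"
  by (simp add: gbin_def ext_fuminus)
lemma gbin_diff_left [simp]: "gbin op (x - x') y = gbin op x y - gbin op x' y"
  by (simp add: gbin_def)
lemma gbin_diff_right [simp]: "gbin op x (y - y') = gbin op x y - gbin op x y'"
  by (simp add: gbin_def ext_fdiff)

lemma gbin_as_ext: "gbin op x y = ext (\<lambda>a. ext (\<lambda>b. gbin op (Poly_Mapping.single a 1) (Poly_Mapping.single b 1)) y) x"
  by (simp add: gbin_def)

lemma gbin_assoc:
  assumes "\<And>a b c. op2 (op1 a b) c = op4 a (op3 b c)"
  shows "gbin op2 (gbin op1 x y) z = gbin op4 x (gbin op3 y z)"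
  by (simp add: gbin_def ext_ext assms)

lemma ext_hom:
  assumes "\<And>a b. \<phi> (op a b) = gbin op' (\<phi> a) (\<phi> b)"
  shows "ext \<phi> (gbin op x y) = gbin op' (ext \<phi> x) (ext \<phi> y)"
proof -
  have "ext \<phi> (gbin op x y) = ext (\<lambda>a. ext (\<lambda>b. \<phi> (op a b)) y) x"
    unfolding gbin_def[of op] ext_ext by simp
  also have "\<dots> = ext (\<lambda>a. ext (\<lambda>b. gbin op' (\<phi> a) (\<phi> b)) y) x"
    by (simp add: assms)
  also have "\<dots> = gbin op' (ext \<phi> x) (ext \<phi> y)"
    unfolding gbin_ext_left gbin_ext_right by (rule ext_swap)
  finally show ?thesis .
qed

lemma keys_gbin: "Poly_Mapping.keys (gbin op x y) \<subseteq> {op a b |a b. a \<in> Poly_Mapping.keys x \<and> b \<in> Poly_Mapping.keys y}"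
proof
  fix k assume k: "k \<in> Poly_Mapping.keys (gbin op x y)"
  have "k \<in> (\<Union>a\<in>Poly_Mapping.keys x. Poly_Mapping.keys (ext (\<lambda>b. Poly_Mapping.single (op a b) (1::complex)) y))"
    using k unfolding gbin_def by (rule subsetD[OF keys_ext])
  then obtain a where a: "a \<in> Poly_Mapping.keys x" "k \<in> Poly_Mapping.keys (ext (\<lambda>b. Poly_Mapping.single (op a b) (1::complex)) y)"
    by (rule UN_E)
  have "k \<in> (\<Union>b\<in>Poly_Mapping.keys y. Poly_Mapping.keys (Poly_Mapping.single (op a b) (1::complex)))"
    using a(2) by (rule subsetD[OF keys_ext])
  then obtain b where b: "b \<in> Poly_Mapping.keys y" "k \<in> Poly_Mapping.keys (Poly_Mapping.single (op a b) (1::complex))"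
    by (rule UN_E)
  from b(2) have "k = op a b" by simp
  with a b show "k \<in> {op a b |a b. a \<in> Poly_Mapping.keys x \<and> b \<in> Poly_Mapping.keys y}" by blast
qed



definition opP :: "mon \<times> mon \<Rightarrow> mon \<times> mon \<Rightarrow> mon \<times> mon" where
  "opP p q = (fst p @ fst q, snd p @ snd q)"

lemma opP_simp [simp]: "opP (a, b) (c, d) = (a @ c, b @ d)"
  by (simp add: opP_def)

lemma hmult_gbin: "hmult = gbin (@)"
  by (rule ext)+ (simp add: hmult_def gbin_def ext_def sc_sum mult.commute)

lemma tens_gbin: "tens = gbin Pair"
  by (rule ext)+ (simp add: tens_def gbin_def ext_def sc_sum mult.commute)

lemma hhmult_gbin: "hhmult = gbin opP"
  by (rule ext)+ (simp add: hhmult_def gbin_def ext_def sc_sum mult.commute opP_def)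

lemma hmult_assoc: "hmult (hmult x y) z = hmult x (hmult y z)"
  unfolding hmult_gbin by (rule gbin_assoc) simp

lemma hhmult_assoc: "hhmult (hhmult x y) z = hhmult x (hhmult y z)"
  unfolding hhmult_gbin by (rule gbin_assoc) (simp add: opP_def)

lemma hmult_hone_left [simp]: "hmult hone x = x"
  by (simp add: hmult_gbin hone_def gbin_single_left)

lemma hmult_hone_right [simp]: "hmult x hone = x"
  by (simp add: hmult_gbin hone_def gbin_def)

lemma hhmult_hhone_left [simp]: "hhmult hhone x = x"
  by (simp add: hhmult_gbin hhone_def gbin_single_left opP_def)

lemma hhmult_hhone_right [simp]: "hhmult x hhone = x"
  by (simp add: hhmult_gbin hhone_def gbin_def opP_def)

lemma hprod_append: "hprod (xs @ ys) = hmult (hprod xs) (hprod ys)"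
  by (induction xs) (auto simp: hprod_def hmult_assoc)

lemma hhprod_append: "hhprod (xs @ ys) = hhmult (hhprod xs) (hhprod ys)"
  by (induction xs) (auto simp: hhprod_def hhmult_assoc)

lemma hprod_Nil [simp]: "hprod [] = hone" by (simp add: hprod_def)
lemma hprod_Cons: "hprod (x # xs) = hmult x (hprod xs)" by (simp add: hprod_def)
lemma hhprod_Nil [simp]: "hhprod [] = hhone" by (simp add: hhprod_def)
lemma hhprod_Cons: "hhprod (x # xs) = hhmult x (hhprod xs)" by (simp add: hhprod_def)

lemma ext_eqI:
  assumes "\<And>k. k \<in> Poly_Mapping.keys x \<Longrightarrow> F (Poly_Mapping.single k 1) = G (Poly_Mapping.single k 1)"
    and "\<And>f. F (ext f x) = ext (\<lambda>k. F (f k)) x"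
    and "\<And>f. G (ext f x) = ext (\<lambda>k. G (f k)) x"
  shows "F x = G x"
proof -
  have "F x = F (ext (\<lambda>k. Poly_Mapping.single k 1) x)" by simp
  also have "\<dots> = ext (\<lambda>k. F (Poly_Mapping.single k 1)) x" by (rule assms(2))
  also have "\<dots> = ext (\<lambda>k. G (Poly_Mapping.single k 1)) x" by (rule ext_cong) (rule assms(1))
  also have "\<dots> = G (ext (\<lambda>k. Poly_Mapping.single k 1) x)" by (rule assms(3)[symmetric])
  finally show ?thesis by simp
qed

lemma gbin_interchange:
  assumes "\<And>a b c d. t (o1 a c) (o2 b d) = o3 (t a b) (t c d)"
  shows "gbin t (gbin o1 a c) (gbin o2 b d) = gbin o3 (gbin t a b) (gbin t c d)"
proof -
  have s: "\<And>ka kb kc kd. gbin t (gbin o1 (Poly_Mapping.single ka 1) (Poly_Mapping.single kc 1)) (gbin o2 (Poly_Mapping.single kb 1) (Poly_Mapping.single kd 1)) =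
     gbin o3 (gbin t (Poly_Mapping.single ka 1) (Poly_Mapping.single kb 1)) (gbin t (Poly_Mapping.single kc 1) (Poly_Mapping.single kd 1))"
    by (simp add: assms)
  have s1: "\<And>ka kb kc. gbin t (gbin o1 (Poly_Mapping.single ka 1) (Poly_Mapping.single kc 1)) (gbin o2 (Poly_Mapping.single kb 1) d) =
     gbin o3 (gbin t (Poly_Mapping.single ka 1) (Poly_Mapping.single kb 1)) (gbin t (Poly_Mapping.single kc 1) d)"
    by (rule ext_eqI[where x=d]) (simp_all only: s gbin_ext_left gbin_ext_right)
  have s2: "\<And>ka kb. gbin t (gbin o1 (Poly_Mapping.single ka 1) c) (gbin o2 (Poly_Mapping.single kb 1) d) =
     gbin o3 (gbin t (Poly_Mapping.single ka 1) (Poly_Mapping.single kb 1)) (gbin t c d)"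
    by (rule ext_eqI[where x=c]) (simp_all only: s1 gbin_ext_left gbin_ext_right)
  have s3: "\<And>ka. gbin t (gbin o1 (Poly_Mapping.single ka 1) c) (gbin o2 b d) =
     gbin o3 (gbin t (Poly_Mapping.single ka 1) b) (gbin t c d)"
    by (rule ext_eqI[where x=b]) (simp_all only: s2 gbin_ext_left gbin_ext_right)
  show ?thesis
    by (rule ext_eqI[where x=a]) (simp_all only: s3 gbin_ext_left gbin_ext_right)
qed

lemma tens_interchange: "hhmult (tens a b) (tens c d) = tens (hmult a c) (hmult b d)"
  unfolding hhmult_gbin tens_gbin hmult_gbin by (rule gbin_interchange[symmetric]) simp

lemma hhprod_tens: "hhprod (map (\<lambda>k. tens (A k) (B k)) xs) = tens (hprod (map A xs)) (hprod (map B xs))"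
proof (induction xs)
  case Nil
  then show ?case by (simp add: hhone_def hone_def tens_gbin)
next
  case (Cons x xs)
  then show ?case by (simp add: hhprod_Cons hprod_Cons tens_interchange)
qed

lemma Delta_ext: "Delta N x = ext (Delta_mon N) x"
  by (simp add: Delta_def ext_def hhscale_sc)

lemma Delta_mon_append: "Delta_mon N (a @ b) = hhmult (Delta_mon N a) (Delta_mon N b)"
  by (simp add: Delta_mon_def hhprod_append)

lemma Delta_mon_Nil [simp]: "Delta_mon N [] = hhone"
  by (simp add: Delta_mon_def)

lemma Delta_mon_single [simp]: "Delta_mon N [g] = Delta_gen N g"
  by (simp add: Delta_mon_def hhprod_Cons)

lemma Delta_hmult: "Delta N (hmult x y) = hhmult (Delta N x) (Delta N y)"
  unfolding Delta_ext hmult_gbin hhmult_gbin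
  by (rule ext_hom) (simp add: Delta_mon_append hhmult_gbin)

lemma Delta_hone [simp]: "Delta N hone = hhone"
  by (simp add: Delta_ext hone_def)

lemma Delta_single [simp]: "Delta N (Poly_Mapping.single m c) = sc c (Delta_mon N m)"
  by (simp add: Delta_ext)

lemma Delta_hprod: "Delta N (hprod xs) = hhprod (map (Delta N) xs)"
  by (induction xs) (simp_all add: hprod_Cons hhprod_Cons Delta_hmult)

lemma Delta_add [simp]: "Delta N (x + y) = Delta N x + Delta N y"
  by (simp add: Delta_ext)
lemma Delta_zero [simp]: "Delta N 0 = 0"
  by (simp add: Delta_ext)
lemma Delta_sum: "Delta N (sum f A) = (\<Sum>a\<in>A. Delta N (f a))"
  by (simp add: Delta_ext)
lemma Delta_sc [simp]: "Delta N (sc c x) = sc c (Delta N x)"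
  by (simp add: Delta_ext)



definition B :: "nat \<Rightarrow> nat list \<Rightarrow> (nat list \<times> nat) list set" where
  "B N u = {bs. concat (map fst bs) = u \<and> (\<forall>b\<in>set bs. fst b \<noteq> [] \<and> snd b \<in> {1..N})}"

definition Pb :: "(nat list \<times> nat) list \<Rightarrow> hel" where
  "Pb bs = hprod (map (\<lambda>b. Y (snd b) (fst b)) bs)"

lemma length_le_concat: "(\<forall>c\<in>set cs. c \<noteq> []) \<Longrightarrow> length cs \<le> length (concat cs)"
proof (induction cs)
  case (Cons c cs)
  then have "length c \<ge> 1" by (simp add: Suc_le_eq)
  then show ?case using Cons by simp
qed simp

lemma length_mem_concat: "x \<in> set xs \<Longrightarrow> length x \<le> length (concat xs)"
  by (induction xs) auto

lemma finite_B: "finite (B N u)"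
proof -
  let ?W = "{w. set w \<subseteq> set u \<and> length w \<le> length u}"
  have fW: "finite ?W" by (rule finite_lists_length_le) simp
  have "B N u \<subseteq> {bs. set bs \<subseteq> ?W \<times> {1..N} \<and> length bs \<le> length u}"
  proof
    fix bs assume bs: "bs \<in> B N u"
    then have c: "concat (map fst bs) = u" and ne: "\<forall>b\<in>set bs. fst b \<noteq> [] \<and> snd b \<in> {1..N}"
      by (auto simp: B_def)
    have "length bs \<le> length u"
      using length_le_concat[of "map fst bs"] ne c by auto
    moreover have "set bs \<subseteq> ?W \<times> {1..N}"
    proof
      fix b assume b: "b \<in> set bs"
      then have "fst b \<in> set (map fst bs)" by simp
      then have "set (fst b) \<subseteq> set u"
        unfolding c[symmetric] using b by fastforce
      moreover have "length (fst b) \<le> length u"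
        using c length_mem_concat[of "fst b" "map fst bs"] b by auto
      ultimately
      show "b \<in> ?W \<times> {1..N}" using ne b by (cases b) auto
    qed
    ultimately show "bs \<in> {bs. set bs \<subseteq> ?W \<times> {1..N} \<and> length bs \<le> length u}" by simp
  qed
  moreover have "finite {bs. set bs \<subseteq> ?W \<times> {1..N} \<and> length bs \<le> length u}"
    by (rule finite_lists_length_le) (use fW in simp)
  ultimately show ?thesis by (rule finite_subset)
qed

lemma finite_IS: "finite (interval_splits u)"
proof -
  let ?W = "{w. set w \<subseteq> set u \<and> length w \<le> length u}"
  have fW: "finite ?W" by (rule finite_lists_length_le) simp
  have "interval_splits u \<subseteq> {cs. set cs \<subseteq> ?W \<and> length cs \<le> length u}"
    using length_le_concat length_mem_concat
    by (fastforce simp: interval_splits_def)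
  moreover have "finite {cs. set cs \<subseteq> ?W \<and> length cs \<le> length u}"
    by (rule finite_lists_length_le) (use fW in simp)
  ultimately show ?thesis by (rule finite_subset)
qed

lemma finite_words: "finite (words N q)"
proof -
  have "words N q \<subseteq> {v. set v \<subseteq> {1..N} \<and> length v \<le> q}" by (auto simp: words_def)
  moreover have "finite {v. set v \<subseteq> {1..N} \<and> length v \<le> q}"
    by (rule finite_lists_length_le) simp
  ultimately show ?thesis by (rule finite_subset)
qed

lemma map_zip_nth:
  assumes "length v = length cs"
  shows "map f (zip cs v) = map (\<lambda>k. f (cs ! k, v ! k)) [0..<length cs]"
  by (rule nth_equalityI) (use assms in auto)

lemma Delta_gen_B: "Delta_gen N (i, u) = (\<Sum>bs\<in>B N u. tens (Pb bs) (Y i (map snd bs)))"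
proof -
  have "Delta_gen N (i, u) = (\<Sum>(cs, v)\<in>Sigma (interval_splits u) (\<lambda>cs. words N (length cs)).
      tens (hprod (map (\<lambda>k. Y (v ! k) (cs ! k)) [0..<length cs])) (Y i v))"
    unfolding Delta_gen_def by (simp add: sum.Sigma finite_IS finite_words)
  also have "\<dots> = (\<Sum>bs\<in>B N u. tens (Pb bs) (Y i (map snd bs)))"
  proof (rule sum.reindex_bij_witness[where i="\<lambda>bs. (map fst bs, map snd bs)" and j="\<lambda>(cs, v). zip cs v"])
    fix a assume "a \<in> Sigma (interval_splits u) (\<lambda>cs. words N (length cs))"
    then obtain cs v where a: "a = (cs, v)" "cs \<in> interval_splits u" "v \<in> words N (length cs)" by auto
    then have l: "length v = length cs" by (simp add: words_def)
    show "(case case a of (cs, v) \<Rightarrow> zip cs v of bs \<Rightarrow> (map fst bs, map snd bs)) = a"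
      using a l by simp
    show "(case a of (cs, v) \<Rightarrow> zip cs v) \<in> B N u"
      using a l by (auto simp: B_def interval_splits_def words_def dest: set_zip_leftD set_zip_rightD)
    show "tens (Pb (case a of (cs, v) \<Rightarrow> zip cs v)) (Y i (map snd (case a of (cs, v) \<Rightarrow> zip cs v))) =
      (case a of (cs, v) \<Rightarrow> tens (hprod (map (\<lambda>k. Y (v ! k) (cs ! k)) [0..<length cs])) (Y i v))"
      using a l by (simp add: Pb_def map_zip_nth) (metis map_nth)
  next
    fix b assume b: "b \<in> B N u"
    show "(case (map fst b, map snd b) of (cs, v) \<Rightarrow> zip cs v) = b" by (simp add: zip_map_fst_snd)
    show "(map fst b, map snd b) \<in> Sigma (interval_splits u) (\<lambda>cs. words N (length cs))"
      using b by (auto simp: B_def interval_splits_def words_def)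
  qed
  finally show ?thesis .
qed

lemma Y_single: "Y c [j] = (if j = c then hone else 0)"
  by (simp add: Y_def)

lemma Y_ge2: "2 \<le> length w \<Longrightarrow> Y c w = Poly_Mapping.single [(c, w)] 1"
  by (simp add: Y_def)

lemma B_single: "B N [j] = (\<lambda>d. [([j], d)]) ` {1..N}"
proof (intro equalityI subsetI)
  fix bs assume "bs \<in> B N [j]"
  then have c: "concat (map fst bs) = [j]" and ne: "\<forall>b\<in>set bs. fst b \<noteq> [] \<and> snd b \<in> {1..N}"
    by (auto simp: B_def)
  then obtain b bs' where bs: "bs = b # bs'" by (cases bs) auto
  have "fst b \<noteq> []" using ne bs by auto
  then have "fst b = [j]" "concat (map fst bs') = []" using c bs by (auto simp: append_eq_Cons_conv)
  moreover have "bs' = []" using calculation(2) ne bs by (cases bs') auto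
  ultimately show "bs \<in> (\<lambda>d. [([j], d)]) ` {1..N}" using bs ne by (cases b) auto
qed (auto simp: B_def)

lemma tens_hone_hone: "tens hone hone = hhone"
  by (simp add: tens_gbin hone_def hhone_def)

lemma Pb_Nil [simp]: "Pb [] = hone" by (simp add: Pb_def)
lemma Pb_Cons: "Pb (b # bs) = hmult (Y (snd b) (fst b)) (Pb bs)" by (simp add: Pb_def hprod_Cons)
lemma Pb_append: "Pb (xs @ ys) = hmult (Pb xs) (Pb ys)" by (simp add: Pb_def hprod_append)
lemma Pb_concat: "Pb (concat Ls) = hprod (map Pb Ls)"
  by (induction Ls) (simp_all add: Pb_append hprod_Cons)

lemma Delta_Y:
  assumes "w \<noteq> []" "set w \<subseteq> {1..N}"
  shows "Delta N (Y c w) = (\<Sum>bs\<in>B N w. tens (Pb bs) (Y c (map snd bs)))"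
proof (cases "2 \<le> length w")
  case True
  then show ?thesis by (simp add: Y_ge2 Delta_gen_B)
next
  case False
  with assms obtain j where w: "w = [j]" by (cases w) (auto simp: Suc_le_eq)
  with assms have j: "j \<in> {1..N}" by auto
  have "(\<Sum>bs\<in>B N w. tens (Pb bs) (Y c (map snd bs))) = (\<Sum>d\<in>{1..N}. tens (Y d [j]) (Y c [d]))"
    unfolding w B_single by (subst sum.reindex) (auto simp: inj_on_def Pb_Cons)
  also have "\<dots> = (\<Sum>d\<in>{1..N}. if d = j then (if j = c then hhone else 0) else 0)"
    by (rule sum.cong) (auto simp: Y_single tens_hone_hone[unfolded tens_gbin] tens_gbin)
  also have "\<dots> = (if j = c then hhone else 0)" using j by (simp add: sum.delta')
  finally show ?thesis using w by (simp add: Y_single)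
qed

definition LS :: "('b \<Rightarrow> 'a set) \<Rightarrow> 'b list \<Rightarrow> 'a list set" where
  "LS A bs = {Ls. list_all2 (\<lambda>L b. L \<in> A b) Ls bs}"

lemma LS_Nil [simp]: "LS A [] = {[]}"
  by (auto simp: LS_def)

lemma LS_Cons: "LS A (b # bs) = (\<lambda>(L, Ls). L # Ls) ` (A b \<times> LS A bs)"
  by (auto simp: LS_def list_all2_Cons2)

lemma foldr_gbin_sum:
  assumes "\<And>b. b \<in> set bs \<Longrightarrow> finite (A b)"
  shows "foldr (gbin op) (map (\<lambda>b. \<Sum>L\<in>A b. F b L) bs) e =
           (\<Sum>Ls\<in>LS A bs. foldr (gbin op) (map (\<lambda>(b, L). F b L) (zip bs Ls)) e)
         \<and> finite (LS A bs)"
  using assms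
proof (induction bs)
  case Nil
  then show ?case by simp
next
  case (Cons b bs)
  let ?X = "\<lambda>Ls. foldr (gbin op) (map (\<lambda>(b, L). F b L) (zip bs Ls)) e"
  from Cons have IH: "foldr (gbin op) (map (\<lambda>b. \<Sum>L\<in>A b. F b L) bs) e = (\<Sum>Ls\<in>LS A bs. ?X Ls)"
    and fin: "finite (LS A bs)" by auto
  have fb: "finite (A b)" using Cons by auto
  have inj: "inj_on (\<lambda>(L, Ls). L # Ls) (A b \<times> LS A bs)" by (auto simp: inj_on_def)
  have "foldr (gbin op) (map (\<lambda>b. \<Sum>L\<in>A b. F b L) (b # bs)) e =
      gbin op (\<Sum>L\<in>A b. F b L) (\<Sum>Ls\<in>LS A bs. ?X Ls)" by (simp add: IH)
  also have "\<dots> = (\<Sum>L\<in>A b. \<Sum>Ls\<in>LS A bs. gbin op (F b L) (?X Ls))"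
    by (simp add: gbin_sum_left gbin_sum_right) (rule sum.swap)
  also have "\<dots> = (\<Sum>(L, Ls)\<in>A b \<times> LS A bs. gbin op (F b L) (?X Ls))"
    by (rule sum.cartesian_product)
  also have "\<dots> = (\<Sum>Ls'\<in>LS A (b # bs). foldr (gbin op) (map (\<lambda>(b, L). F b L) (zip (b # bs) Ls')) e)"
    unfolding LS_Cons by (subst sum.reindex[OF inj]) (auto intro!: sum.cong)
  finally show ?case using fin fb by (simp add: LS_Cons)
qed

lemma finite_LS: "(\<And>b. b \<in> set bs \<Longrightarrow> finite (A b)) \<Longrightarrow> finite (LS A bs)"
  using foldr_gbin_sum[where bs=bs and A=A and op="(@)" and F="\<lambda>_ _. (0::hel)" and e=hone] by blast

lemma hhprod_sum:
  assumes "\<And>b. b \<in> set bs \<Longrightarrow> finite (A b)"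
  shows "hhprod (map (\<lambda>b. \<Sum>L\<in>A b. F b L) bs) = (\<Sum>Ls\<in>LS A bs. hhprod (map (\<lambda>(b, L). F b L) (zip bs Ls)))"
  using foldr_gbin_sum[OF assms, where op=opP and F=F and e=hhone] by (simp add: hhprod_def hhmult_gbin)

lemma hprod_sum:
  assumes "\<And>b. b \<in> set bs \<Longrightarrow> finite (A b)"
  shows "hprod (map (\<lambda>b. \<Sum>L\<in>A b. F b L) bs) = (\<Sum>Ls\<in>LS A bs. hprod (map (\<lambda>(b, L). F b L) (zip bs Ls)))"
  using foldr_gbin_sum[OF assms, where op="(@)" and F=F and e=hone] by (simp add: hprod_def hmult_gbin)



fun splitby :: "nat list \<Rightarrow> 'a list \<Rightarrow> 'a list list" where
  "splitby [] xs = []"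
| "splitby (n # ns) xs = take n xs # splitby ns (drop n xs)"

lemma splitby_concat: "splitby (map length Ls) (concat Ls) = Ls"
  by (induction Ls) auto

lemma concat_splitby: "sum_list ns = length xs \<Longrightarrow> concat (splitby ns xs) = xs"
  by (induction ns arbitrary: xs) auto

lemma length_splitby [simp]: "length (splitby ns xs) = length ns"
  by (induction ns arbitrary: xs) auto

lemma map_length_splitby: "sum_list ns = length xs \<Longrightarrow> map length (splitby ns xs) = ns"
  by (induction ns arbitrary: xs) (auto simp: min_def)

lemma splitby_map: "splitby ns (map f xs) = map (map f) (splitby ns xs)"
  by (induction ns arbitrary: xs) (auto simp: take_map drop_map)

lemma set_splitby: "L \<in> set (splitby ns xs) \<Longrightarrow> set L \<subseteq> set xs"
  by (induction ns arbitrary: xs) (auto dest: in_set_takeD in_set_dropD)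

section \<open>Coassociativity\<close>

definition op3 :: "(mon \<times> mon) \<times> mon \<Rightarrow> (mon \<times> mon) \<times> mon \<Rightarrow> (mon \<times> mon) \<times> mon" where
  "op3 x y = (opP (fst x) (fst y), snd x @ snd y)"

definition t2 :: "mon \<Rightarrow> mon \<times> mon \<Rightarrow> (mon \<times> mon) \<times> mon" where
  "t2 a q = ((a, fst q), snd q)"

definition D1 :: "nat \<Rightarrow> mon \<Rightarrow> ((mon \<times> mon) \<times> mon) \<Rightarrow>\<^sub>0 complex" where
  "D1 N m = ext (\<lambda>p. gbin Pair (Delta_mon N (fst p)) (Poly_Mapping.single (snd p) 1)) (Delta_mon N m)"

definition D2 :: "nat \<Rightarrow> mon \<Rightarrow> ((mon \<times> mon) \<times> mon) \<Rightarrow>\<^sub>0 complex" where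
  "D2 N m = ext (\<lambda>p. gbin t2 (Poly_Mapping.single (fst p) 1) (Delta_mon N (snd p))) (Delta_mon N m)"

lemma ext_tens_gen: "ext (\<lambda>p. gbin op (F (fst p)) (G (snd p))) (tens X1 X2) = gbin op (ext F X1) (ext G X2)"
proof -
  have "ext (\<lambda>p. gbin op (F (fst p)) (G (snd p))) (tens X1 X2) = ext (\<lambda>a. ext (\<lambda>b. gbin op (F a) (G b)) X2) X1"
    unfolding tens_gbin gbin_def[of Pair] ext_ext by simp
  also have "\<dots> = ext (\<lambda>a. gbin op (F a) (ext G X2)) X1"
    by (simp only: gbin_ext_right)
  also have "\<dots> = gbin op (ext F X1) (ext G X2)"
    by (simp only: gbin_ext_left)
  finally show ?thesis .
qed

lemma single_append: "Poly_Mapping.single (a @ b) (1::complex) = gbin (@) (Poly_Mapping.single a 1) (Poly_Mapping.single b 1)"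
  by simp

lemma D1_append: "D1 N (a @ b) = gbin op3 (D1 N a) (D1 N b)"
  unfolding D1_def Delta_mon_append hhmult_gbin
proof (rule ext_hom)
  fix p q :: "mon \<times> mon"
  show "gbin Pair (Delta_mon N (fst (opP p q))) (Poly_Mapping.single (snd (opP p q)) 1) =
    gbin op3 (gbin Pair (Delta_mon N (fst p)) (Poly_Mapping.single (snd p) 1)) (gbin Pair (Delta_mon N (fst q)) (Poly_Mapping.single (snd q) 1))"
    unfolding opP_def fst_conv snd_conv Delta_mon_append hhmult_gbin single_append tens_gbin
    by (rule gbin_interchange) (simp add: op3_def opP_def)
qed

lemma D2_append: "D2 N (a @ b) = gbin op3 (D2 N a) (D2 N b)"
  unfolding D2_def Delta_mon_append hhmult_gbin
proof (rule ext_hom)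
  fix p q :: "mon \<times> mon"
  show "gbin t2 (Poly_Mapping.single (fst (opP p q)) 1) (Delta_mon N (snd (opP p q))) =
    gbin op3 (gbin t2 (Poly_Mapping.single (fst p) 1) (Delta_mon N (snd p))) (gbin t2 (Poly_Mapping.single (fst q) 1) (Delta_mon N (snd q)))"
    unfolding opP_def fst_conv snd_conv Delta_mon_append hhmult_gbin single_append
    by (rule gbin_interchange) (simp add: op3_def t2_def opP_def)
qed

lemma D1_Nil: "D1 N [] = Poly_Mapping.single (([], []), []) 1"
  by (simp add: D1_def hhone_def tens_gbin)

lemma D2_Nil: "D2 N [] = Poly_Mapping.single (([], []), []) 1"
  by (simp add: D2_def hhone_def t2_def)

lemma Delta_Pb:
  assumes "bs \<in> B N u" "set u \<subseteq> {1..N}"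
  shows "Delta N (Pb bs) = (\<Sum>Ls\<in>LS (\<lambda>b. B N (fst b)) bs.
     tens (Pb (concat Ls)) (Pb (zip (map (map snd) Ls) (map snd bs))))"
proof -
  have bsu: "concat (map fst bs) = u" and bsv: "\<forall>b\<in>set bs. fst b \<noteq> [] \<and> snd b \<in> {1..N}"
    using assms(1) by (auto simp: B_def)
  have sub: "\<And>b. b \<in> set bs \<Longrightarrow> set (fst b) \<subseteq> {1..N}"
    using assms(2) bsu by fastforce
  have "Delta N (Pb bs) = hhprod (map (\<lambda>b. Delta N (Y (snd b) (fst b))) bs)"
    by (simp add: Pb_def Delta_hprod comp_def)
  also have "\<dots> = hhprod (map (\<lambda>b. \<Sum>L\<in>B N (fst b). tens (Pb L) (Y (snd b) (map snd L))) bs)"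
  proof (rule arg_cong[where f=hhprod], rule map_cong[OF refl])
    fix b assume "b \<in> set bs"
    then show "Delta N (Y (snd b) (fst b)) = (\<Sum>L\<in>B N (fst b). tens (Pb L) (Y (snd b) (map snd L)))"
      using bsv sub by (intro Delta_Y) auto
  qed
  also have "\<dots> = (\<Sum>Ls\<in>LS (\<lambda>b. B N (fst b)) bs. hhprod (map (\<lambda>(b, L). tens (Pb L) (Y (snd b) (map snd L))) (zip bs Ls)))"
    by (rule hhprod_sum) (rule finite_B)
  also have "\<dots> = (\<Sum>Ls\<in>LS (\<lambda>b. B N (fst b)) bs. tens (Pb (concat Ls)) (Pb (zip (map (map snd) Ls) (map snd bs))))"
  proof (rule sum.cong[OF refl])
    fix Ls assume "Ls \<in> LS (\<lambda>b. B N (fst b)) bs"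
    then have l: "length Ls = length bs" by (auto simp: LS_def dest: list_all2_lengthD)
    have "hhprod (map (\<lambda>(b, L). tens (Pb L) (Y (snd b) (map snd L))) (zip bs Ls)) =
       tens (hprod (map (\<lambda>p. Pb (snd p)) (zip bs Ls))) (hprod (map (\<lambda>p. Y (snd (fst p)) (map snd (snd p))) (zip bs Ls)))"
      unfolding split_def by (rule hhprod_tens)
    also have "hprod (map (\<lambda>p. Pb (snd p)) (zip bs Ls)) = Pb (concat Ls)"
    proof -
      have "map (\<lambda>p. Pb (snd p)) (zip bs Ls) = map Pb (map snd (zip bs Ls))" by simp
      also have "map snd (zip bs Ls) = Ls" using l by simp
      finally have "map (\<lambda>p. Pb (snd p)) (zip bs Ls) = map Pb Ls" .
      then show ?thesis by (simp add: Pb_concat)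
    qed
    also have "hprod (map (\<lambda>p. Y (snd (fst p)) (map snd (snd p))) (zip bs Ls)) = Pb (zip (map (map snd) Ls) (map snd bs))"
      unfolding Pb_def by (rule arg_cong[where f=hprod], rule nth_equalityI) (simp_all add: l)
    finally show "hhprod (map (\<lambda>(b, L). tens (Pb L) (Y (snd b) (map snd L))) (zip bs Ls)) =
       tens (Pb (concat Ls)) (Pb (zip (map (map snd) Ls) (map snd bs)))" .
  qed
  finally show ?thesis .
qed

lemma D1_gen:
  assumes "set u \<subseteq> {1..N}"
  shows "D1 N [(i, u)] = (\<Sum>bs\<in>B N u. \<Sum>Ls\<in>LS (\<lambda>b. B N (fst b)) bs.
      gbin Pair (tens (Pb (concat Ls)) (Pb (zip (map (map snd) Ls) (map snd bs)))) (Y i (map snd bs)))"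
proof -
  have "D1 N [(i, u)] = (\<Sum>bs\<in>B N u. gbin Pair (Delta N (Pb bs)) (Y i (map snd bs)))"
    unfolding D1_def Delta_mon_single Delta_gen_B ext_sum
    by (simp add: ext_tens_gen[where F="Delta_mon N" and G="\<lambda>c. Poly_Mapping.single c 1"] Delta_ext)
  also have "\<dots> = (\<Sum>bs\<in>B N u. \<Sum>Ls\<in>LS (\<lambda>b. B N (fst b)) bs.
      gbin Pair (tens (Pb (concat Ls)) (Pb (zip (map (map snd) Ls) (map snd bs)))) (Y i (map snd bs)))"
    by (rule sum.cong[OF refl]) (simp add: Delta_Pb[OF _ assms] tens_gbin gbin_sum_left)
  finally show ?thesis .
qed

lemma D2_gen:
  assumes "set u \<subseteq> {1..N}" "u \<noteq> []"
  shows "D2 N [(i, u)] = (\<Sum>bs\<in>B N u. \<Sum>cs\<in>B N (map snd bs).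
      gbin Pair (tens (Pb bs) (Pb cs)) (Y i (map snd cs)))"
proof -
  have "D2 N [(i, u)] = (\<Sum>bs\<in>B N u. gbin t2 (Pb bs) (Delta N (Y i (map snd bs))))"
    unfolding D2_def Delta_mon_single Delta_gen_B ext_sum
    by (simp add: ext_tens_gen[where G="Delta_mon N" and F="\<lambda>c. Poly_Mapping.single c 1"] Delta_ext)
  also have "\<dots> = (\<Sum>bs\<in>B N u. \<Sum>cs\<in>B N (map snd bs).
      gbin Pair (tens (Pb bs) (Pb cs)) (Y i (map snd cs)))"
  proof (rule sum.cong[OF refl])
    fix bs assume bs: "bs \<in> B N u"
    then have "bs \<noteq> []" using assms(2) by (auto simp: B_def)
    moreover have "set (map snd bs) \<subseteq> {1..N}" using bs by (auto simp: B_def)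
    ultimately have "Delta N (Y i (map snd bs)) = (\<Sum>cs\<in>B N (map snd bs). tens (Pb cs) (Y i (map snd cs)))"
      by (intro Delta_Y) auto
    moreover have "\<And>C D. gbin t2 (Pb bs) (tens C D) = gbin Pair (tens (Pb bs) C) D"
      unfolding tens_gbin by (rule gbin_assoc[symmetric]) (simp add: t2_def)
    ultimately show "gbin t2 (Pb bs) (Delta N (Y i (map snd bs))) = (\<Sum>cs\<in>B N (map snd bs).
      gbin Pair (tens (Pb bs) (Pb cs)) (Y i (map snd cs)))"
      by (simp add: gbin_sum_right)
  qed
  finally show ?thesis .
qed



lemma LS_mem:
  "Ls \<in> LS (\<lambda>b. B N (fst b)) bs \<longleftrightarrow> length Ls = length bs \<and> (\<forall>k<length bs. Ls ! k \<in> B N (fst (bs ! k)))"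
  by (auto simp: LS_def list_all2_conv_all_nth)

lemma B_mem: "bs \<in> B N u \<longleftrightarrow> concat (map fst bs) = u \<and> (\<forall>b\<in>set bs. fst b \<noteq> [] \<and> snd b \<in> {1..N})"
  by (simp add: B_def)

lemma concat_map_fst_concat: "concat (map fst (concat Ls)) = concat (map (\<lambda>L. concat (map fst L)) Ls)"
  by (induction Ls) auto

lemma coassoc_bij:
  assumes "set u \<subseteq> {1..N}" "u \<noteq> []"
  shows "(\<Sum>(bs, Ls)\<in>Sigma (B N u) (LS (\<lambda>b. B N (fst b))).
      gbin Pair (tens (Pb (concat Ls)) (Pb (zip (map (map snd) Ls) (map snd bs)))) (Y i (map snd bs))) =
    (\<Sum>(bs, cs)\<in>Sigma (B N u) (\<lambda>bs. B N (map snd bs)).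
      gbin Pair (tens (Pb bs) (Pb cs)) (Y i (map snd cs)))"
proof (rule sum.reindex_bij_witness[where
      j="\<lambda>(bs, Ls). (concat Ls, zip (map (map snd) Ls) (map snd bs))" and
      i="\<lambda>(bs', cs). (zip (map (\<lambda>L. concat (map fst L)) (splitby (map (length \<circ> fst) cs) bs')) (map snd cs),
                        splitby (map (length \<circ> fst) cs) bs')"])
  fix a assume a: "a \<in> Sigma (B N u) (LS (\<lambda>b. B N (fst b)))"
  obtain bs Ls where a': "a = (bs, Ls)" by (cases a)
  from a have bs: "bs \<in> B N u" and Ls: "Ls \<in> LS (\<lambda>b. B N (fst b)) bs"
    by (simp_all add: a')
  have l: "length Ls = length bs" and Lk: "\<And>k. k < length bs \<Longrightarrow> Ls ! k \<in> B N (fst (bs ! k))"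
    using Ls by (auto simp: LS_mem)
  have bsu: "concat (map fst bs) = u" and bsv: "\<And>b. b \<in> set bs \<Longrightarrow> fst b \<noteq> [] \<and> snd b \<in> {1..N}"
    using bs by (auto simp: B_mem)
  have Lkc: "\<And>k. k < length bs \<Longrightarrow> concat (map fst (Ls ! k)) = fst (bs ! k)"
    using Lk by (auto simp: B_mem)
  have Lkv: "\<And>k b. k < length bs \<Longrightarrow> b \<in> set (Ls ! k) \<Longrightarrow> fst b \<noteq> [] \<and> snd b \<in> {1..N}"
    using Lk by (auto simp: B_mem)
  have Lkne: "Ls ! k \<noteq> []" if k: "k < length bs" for k
  proof -
    have "fst (bs ! k) \<noteq> []" using bsv[OF nth_mem[OF k]] by simp
    then show ?thesis using Lkc[OF k] by auto
  qed
  have mfst: "map (\<lambda>L. concat (map fst L)) Ls = map fst bs"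
    by (rule nth_equalityI) (simp_all add: l Lkc)
  have mlen: "map (length \<circ> fst) (zip (map (map snd) Ls) (map snd bs)) = map length Ls"
    by (rule nth_equalityI) (simp_all add: l)
  show "(case case a of (bs, Ls) \<Rightarrow> (concat Ls, zip (map (map snd) Ls) (map snd bs)) of
        (bs', cs) \<Rightarrow> (zip (map (\<lambda>L. concat (map fst L)) (splitby (map (length \<circ> fst) cs) bs')) (map snd cs),
                     splitby (map (length \<circ> fst) cs) bs')) = a"
    using l by (simp add: a' mlen splitby_concat mfst zip_map_fst_snd)
  show "(case a of (bs, Ls) \<Rightarrow> (concat Ls, zip (map (map snd) Ls) (map snd bs))) \<in> Sigma (B N u) (\<lambda>bs. B N (map snd bs))"
  proof -
    have c1: "concat Ls \<in> B N u"
    proof -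
      have "concat (map fst (concat Ls)) = u"
        by (simp add: concat_map_fst_concat mfst bsu)
      moreover have "\<forall>b\<in>set (concat Ls). fst b \<noteq> [] \<and> snd b \<in> {1..N}"
      proof
        fix b assume "b \<in> set (concat Ls)"
        then obtain L where L: "L \<in> set Ls" "b \<in> set L" by auto
        then obtain k where k: "k < length Ls" "Ls ! k = L" by (auto simp: in_set_conv_nth)
        show "fst b \<noteq> [] \<and> snd b \<in> {1..N}" using Lkv[of k b] k L l by simp
      qed
      ultimately show ?thesis by (simp add: B_mem)
    qed
    have c2: "zip (map (map snd) Ls) (map snd bs) \<in> B N (map snd (concat Ls))"
    proof -
      have "concat (map fst (zip (map (map snd) Ls) (map snd bs))) = map snd (concat Ls)"
        using l by (simp add: map_concat)
      moreover have "\<forall>c\<in>set (zip (map (map snd) Ls) (map snd bs)). fst c \<noteq> [] \<and> snd c \<in> {1..N}"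
      proof
        fix c assume "c \<in> set (zip (map (map snd) Ls) (map snd bs))"
        then obtain k where k: "k < length bs" and c: "c = (map snd (Ls ! k), snd (bs ! k))"
          using l by (auto simp: set_zip)
        show "fst c \<noteq> [] \<and> snd c \<in> {1..N}" using Lkne[OF k] bsv[OF nth_mem[OF k]] c by simp
      qed
      ultimately show ?thesis by (simp add: B_mem)
    qed
    show ?thesis using c1 c2 by (simp add: a')
  qed
  show "(case case a of (bs, Ls) \<Rightarrow> (concat Ls, zip (map (map snd) Ls) (map snd bs)) of
     (bs, cs) \<Rightarrow> gbin Pair (tens (Pb bs) (Pb cs)) (Y i (map snd cs))) =
    (case a of (bs, Ls) \<Rightarrow> gbin Pair (tens (Pb (concat Ls)) (Pb (zip (map (map snd) Ls) (map snd bs)))) (Y i (map snd bs)))"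
    using l by (simp add: a')
next
  fix b assume b: "b \<in> Sigma (B N u) (\<lambda>bs. B N (map snd bs))"
  obtain bs' cs where b': "b = (bs', cs)" by (cases b)
  from b have bs': "bs' \<in> B N u" and cs: "cs \<in> B N (map snd bs')"
    by (simp_all add: b')
  let ?ns = "map (length \<circ> fst) cs"
  let ?Ls = "splitby ?ns bs'"
  have bsu: "concat (map fst bs') = u" and bsv: "\<And>b. b \<in> set bs' \<Longrightarrow> fst b \<noteq> [] \<and> snd b \<in> {1..N}"
    using bs' by (auto simp: B_mem)
  have csu: "concat (map fst cs) = map snd bs'" and csv: "\<And>c. c \<in> set cs \<Longrightarrow> fst c \<noteq> [] \<and> snd c \<in> {1..N}"
    using cs by (auto simp: B_mem)
  have ns: "?ns = map length (map fst cs)" by simp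
  have sl: "sum_list ?ns = length bs'"
  proof -
    have "sum_list ?ns = length (concat (map fst cs))" by (simp add: length_concat comp_def)
    also have "\<dots> = length bs'" by (simp add: csu)
    finally show ?thesis .
  qed
  have cL: "concat ?Ls = bs'" by (rule concat_splitby[OF sl])
  have lL: "map length ?Ls = ?ns" by (rule map_length_splitby[OF sl])
  have lenL: "length ?Ls = length cs" by simp
  have msnd: "map (map snd) ?Ls = map fst cs"
  proof -
    have "map (map snd) ?Ls = splitby ?ns (map snd bs')" by (simp add: splitby_map)
    also have "\<dots> = splitby (map length (map fst cs)) (concat (map fst cs))" by (simp only: ns csu)
    also have "\<dots> = map fst cs" by (rule splitby_concat)
    finally show ?thesis .
  qed
  have Lne: "\<And>k. k < length cs \<Longrightarrow> ?Ls ! k \<noteq> []"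
  proof -
    fix k assume k: "k < length cs"
    have "length (?Ls ! k) = length (fst (cs ! k))"
      using arg_cong[OF lL, of "\<lambda>xs. xs ! k"] k by simp
    moreover have "fst (cs ! k) \<noteq> []" using csv k nth_mem by blast
    ultimately show "?Ls ! k \<noteq> []" by auto
  qed
  have Lsub: "set (?Ls ! k) \<subseteq> set bs'" if k: "k < length cs" for k
  proof -
    have "?Ls ! k \<in> set ?Ls" using k lenL by (intro nth_mem) simp
    then show ?thesis by (rule set_splitby)
  qed
  let ?bs = "zip (map (\<lambda>L. concat (map fst L)) ?Ls) (map snd cs)"
  have fst_bs: "\<And>k. k < length cs \<Longrightarrow> fst (?bs ! k) = concat (map fst (?Ls ! k))"
    using lenL by simp
  have concne: "\<And>k. k < length cs \<Longrightarrow> concat (map fst (?Ls ! k)) \<noteq> []"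
  proof -
    fix k assume k: "k < length cs"
    obtain x xs where "?Ls ! k = x # xs" using Lne[OF k] by (cases "?Ls ! k") auto
    moreover have "x \<in> set bs'" using Lsub[OF k] calculation by auto
    ultimately show "concat (map fst (?Ls ! k)) \<noteq> []" using bsv by auto
  qed
  show "(case case b of (bs', cs) \<Rightarrow>
           (zip (map (\<lambda>L. concat (map fst L)) (splitby (map (length \<circ> fst) cs) bs')) (map snd cs),
            splitby (map (length \<circ> fst) cs) bs') of
        (bs, Ls) \<Rightarrow> (concat Ls, zip (map (map snd) Ls) (map snd bs))) = b"
    using lenL by (simp add: b' cL msnd zip_map_fst_snd)
  show "(case b of (bs', cs) \<Rightarrow>
           (zip (map (\<lambda>L. concat (map fst L)) (splitby (map (length \<circ> fst) cs) bs')) (map snd cs),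
            splitby (map (length \<circ> fst) cs) bs')) \<in> Sigma (B N u) (LS (\<lambda>b. B N (fst b)))"
  proof -
    have c1: "?bs \<in> B N u"
    proof -
      have "concat (map fst ?bs) = concat (map (\<lambda>L. concat (map fst L)) ?Ls)" using lenL by simp
      also have "\<dots> = concat (map fst (concat ?Ls))" by (simp add: concat_map_fst_concat)
      also have "\<dots> = u" by (simp add: cL bsu)
      finally have "concat (map fst ?bs) = u" .
      moreover have "\<forall>c\<in>set ?bs. fst c \<noteq> [] \<and> snd c \<in> {1..N}"
      proof
        fix c assume "c \<in> set ?bs"
        then obtain k where k: "k < length cs" and c: "c = (concat (map fst (?Ls ! k)), snd (cs ! k))"
          using lenL by (auto simp: set_zip)
        show "fst c \<noteq> [] \<and> snd c \<in> {1..N}" using concne[OF k] csv[OF nth_mem[OF k]] c by simp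
      qed
      ultimately show ?thesis by (simp add: B_mem)
    qed
    have c2: "?Ls \<in> LS (\<lambda>b. B N (fst b)) ?bs"
      unfolding LS_mem
    proof (intro conjI allI impI)
      show "length ?Ls = length ?bs" using lenL by simp
      fix k assume k: "k < length ?bs"
      then have k': "k < length cs" using lenL by simp
      show "?Ls ! k \<in> B N (fst (?bs ! k))"
        unfolding fst_bs[OF k'] B_mem using Lsub[OF k'] bsv by auto
    qed
    show ?thesis using c1 c2 by (simp add: b')
  qed
qed

lemma coassoc_gen:
  assumes "set u \<subseteq> {1..N}" "u \<noteq> []"
  shows "D1 N [(i, u)] = D2 N [(i, u)]"
proof -
  have f1: "\<And>bs. bs \<in> B N u \<Longrightarrow> finite (LS (\<lambda>b. B N (fst b)) bs)"
    by (rule finite_LS) (rule finite_B)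
  show ?thesis
    unfolding D1_gen[OF assms(1)] D2_gen[OF assms]
    using coassoc_bij[OF assms, of i]
    by (simp add: sum.Sigma[OF finite_B] f1 finite_B)
qed

lemma coassoc:
  assumes "valid_mon N m"
  shows "D1 N m = D2 N m"
  using assms
proof (induction m)
  case Nil
  then show ?case by (simp add: D1_Nil D2_Nil)
next
  case (Cons g m)
  obtain i u where g: "g = (i, u)" by (cases g)
  have v: "set u \<subseteq> {1..N}" "u \<noteq> []" using Cons.prems g by (auto simp: valid_mon_def valid_gen_def)
  have "D1 N (g # m) = gbin op3 (D1 N [g]) (D1 N m)" using D1_append[of N "[g]" m] by simp
  moreover have "D2 N (g # m) = gbin op3 (D2 N [g]) (D2 N m)" using D2_append[of N "[g]" m] by simp
  moreover have "D1 N m = D2 N m" using Cons by (simp add: valid_mon_def)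
  ultimately show ?case using coassoc_gen[OF v, of i] g by simp
qed



section \<open>Counit laws\<close>

definition phiL :: "mon \<times> mon \<Rightarrow> hel" where
  "phiL p = (if fst p = [] then Poly_Mapping.single (snd p) 1 else 0)"

definition phiR :: "mon \<times> mon \<Rightarrow> hel" where
  "phiR p = (if snd p = [] then Poly_Mapping.single (fst p) 1 else 0)"

lemma sum_mult_delta:
  assumes "finite K"
  shows "(\<Sum>b\<in>K. f b * (if b = k then 1 else 0)) = (if k \<in> K then f k else (0::complex))"
proof -
  have "(\<Sum>b\<in>K. f b * (if b = k then 1 else 0)) = (\<Sum>b\<in>K. if b = k then f k else 0)"
    by (rule sum.cong) auto
  then show ?thesis using assms by (simp add: sum.delta')
qed

lemma ext_single_c: "ext (\<lambda>a. Poly_Mapping.single a c) X = sc c X"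
proof -
  have "ext (\<lambda>a. Poly_Mapping.single a c) X = ext (\<lambda>a. sc c (Poly_Mapping.single a 1)) X" by simp
  also have "\<dots> = sc c X" by (simp only: ext_fsc ext_id)
  finally show ?thesis .
qed

lemma ext_if_single: "ext (\<lambda>a. if a = k then Z else 0) X = sc (Poly_Mapping.lookup X k) Z"
proof (cases "k \<in> Poly_Mapping.keys X")
  case True
  then show ?thesis
    by (simp add: ext_def if_distrib[of "sc _"] sum.delta cong: if_cong)
next
  case False
  then have "Poly_Mapping.lookup X k = 0" by (simp add: in_keys_iff)
  moreover have "ext (\<lambda>a. if a = k then Z else 0) X = 0"
    using False by (subst ext_cong[where g="\<lambda>_. 0"]) auto
  ultimately show ?thesis by simp
qed

lemma ext_if_single': "ext (\<lambda>a. if a = k then F a else 0) X = sc (Poly_Mapping.lookup X k) (F k)"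
proof -
  have "ext (\<lambda>a. if a = k then F a else 0) X = ext (\<lambda>a. if a = k then F k else 0) X"
    by (rule ext_cong) simp
  then show ?thesis by (simp add: ext_if_single)
qed

lemma ext_phiL_tens: "ext phiL (tens X1 X2) = sc (Poly_Mapping.lookup X1 []) X2"
proof -
  have "ext phiL (tens X1 X2) = ext (\<lambda>a. ext (\<lambda>b. phiL (a, b)) X2) X1"
    unfolding tens_gbin gbin_def ext_ext by simp
  also have "\<dots> = ext (\<lambda>a. if a = [] then X2 else 0) X1"
    by (rule ext_cong) (simp add: phiL_def)
  finally show ?thesis by (simp add: ext_if_single)
qed

lemma ext_phiR_tens: "ext phiR (tens X1 X2) = sc (Poly_Mapping.lookup X2 []) X1"
proof -
  have "ext phiR (tens X1 X2) = ext (\<lambda>a. ext (\<lambda>b. phiR (a, b)) X2) X1"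
    unfolding tens_gbin gbin_def ext_ext by simp
  also have "\<dots> = ext (\<lambda>a. sc (Poly_Mapping.lookup X2 []) (Poly_Mapping.single a 1)) X1"
    by (rule ext_cong) (simp add: phiR_def ext_if_single')
  finally show ?thesis by (simp add: ext_single_c)
qed

lemma eps_hmult: "Poly_Mapping.lookup (hmult x y) [] = Poly_Mapping.lookup x [] * Poly_Mapping.lookup y []"
proof -
  have "Poly_Mapping.lookup (hmult x y) [] =
      (\<Sum>a\<in>Poly_Mapping.keys x. Poly_Mapping.lookup x a * (\<Sum>b\<in>Poly_Mapping.keys y. Poly_Mapping.lookup y b * (if a @ b = [] then 1 else 0)))"
    unfolding hmult_gbin gbin_def lookup_ext by (simp add: lookup_single when_def)
  also have "\<dots> = (\<Sum>a\<in>Poly_Mapping.keys x. if a = [] then Poly_Mapping.lookup x a * Poly_Mapping.lookup y [] else 0)"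
  proof (rule sum.cong[OF refl])
    fix a
    have "(\<Sum>b\<in>Poly_Mapping.keys y. Poly_Mapping.lookup y b * (if a @ b = [] then 1 else 0)) =
        (if a = [] then Poly_Mapping.lookup y [] else 0)"
      by (cases "a = []") (auto simp: sum_mult_delta in_keys_iff)
    then show "Poly_Mapping.lookup x a * (\<Sum>b\<in>Poly_Mapping.keys y. Poly_Mapping.lookup y b * (if a @ b = [] then 1 else 0)) =
        (if a = [] then Poly_Mapping.lookup x a * Poly_Mapping.lookup y [] else 0)" by simp
  qed
  also have "\<dots> = Poly_Mapping.lookup x [] * Poly_Mapping.lookup y []"
    by (cases "[] \<in> Poly_Mapping.keys x") (auto simp: sum.delta in_keys_iff)
  finally show ?thesis .
qed

lemma eps_hone [simp]: "Poly_Mapping.lookup hone [] = 1"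
  by (simp add: hone_def)

lemma eps_Y:
  assumes "w \<noteq> []"
  shows "Poly_Mapping.lookup (Y c w) [] = (if w = [c] then 1 else 0)"
proof (cases "2 \<le> length w")
  case True
  then have "w \<noteq> [c]" by auto
  with True show ?thesis by (simp add: Y_ge2 lookup_single when_def)
next
  case False
  with assms obtain j where "w = [j]" by (cases w) (auto simp: Suc_le_eq)
  then show ?thesis by (simp add: Y_single)
qed

lemma eps_Pb: "(\<forall>b\<in>set bs. fst b \<noteq> []) \<Longrightarrow>
   Poly_Mapping.lookup (Pb bs) [] = (if \<forall>b\<in>set bs. fst b = [snd b] then 1 else 0)"
  by (induction bs) (auto simp: Pb_Cons eps_hmult eps_Y)

lemma EL_gen:
  assumes "valid_gen N (i, u)"
  shows "ext phiL (Delta_gen N (i, u)) = Poly_Mapping.single [(i, u)] 1"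
proof -
  have u: "set u \<subseteq> {1..N}" "2 \<le> length u" using assms by (auto simp: valid_gen_def)
  let ?b0 = "map (\<lambda>x. ([x], x)) u"
  have "ext phiL (Delta_gen N (i, u)) = (\<Sum>bs\<in>B N u. sc (Poly_Mapping.lookup (Pb bs) []) (Y i (map snd bs)))"
    by (simp add: Delta_gen_B ext_phiL_tens)
  also have "\<dots> = (\<Sum>bs\<in>B N u. if bs = ?b0 then Y i u else 0)"
  proof (rule sum.cong[OF refl])
    fix bs assume bs: "bs \<in> B N u"
    then have ne: "\<forall>b\<in>set bs. fst b \<noteq> []" and c: "concat (map fst bs) = u" by (auto simp: B_def)
    have iff: "(\<forall>b\<in>set bs. fst b = [snd b]) \<longleftrightarrow> bs = ?b0"
    proof
      assume h: "\<forall>b\<in>set bs. fst b = [snd b]"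
      then have "map fst bs = map (\<lambda>b. [snd b]) bs" by simp
      then have "u = map snd bs" using c by (induction bs arbitrary: u) auto
      moreover have "bs = map (\<lambda>b. ([snd b], snd b)) bs"
        using h by (induction bs) (auto simp: prod_eq_iff)
      moreover have "?b0 = map (\<lambda>b. ([snd b], snd b)) (bs::(nat list \<times> nat) list)" if "u = map snd bs"
        using that by (simp add: comp_def)
      ultimately show "bs = ?b0" by metis
    next
      assume "bs = ?b0" then show "\<forall>b\<in>set bs. fst b = [snd b]" by auto
    qed
    show "sc (Poly_Mapping.lookup (Pb bs) []) (Y i (map snd bs)) = (if bs = ?b0 then Y i u else 0)"
      using iff by (simp add: eps_Pb[OF ne] comp_def)
  qed
  also have "\<dots> = Y i u"
  proof -
    have "?b0 \<in> B N u" using u by (auto simp: B_def comp_def)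
    then show ?thesis by (simp add: sum.delta' finite_B)
  qed
  finally show ?thesis using u by (simp add: Y_ge2)
qed

lemma ER_gen:
  assumes "valid_gen N (i, u)"
  shows "ext phiR (Delta_gen N (i, u)) = Poly_Mapping.single [(i, u)] 1"
proof -
  have u: "set u \<subseteq> {1..N}" "2 \<le> length u" "i \<in> {1..N}" using assms by (auto simp: valid_gen_def)
  have "ext phiR (Delta_gen N (i, u)) = (\<Sum>bs\<in>B N u. sc (Poly_Mapping.lookup (Y i (map snd bs)) []) (Pb bs))"
    by (simp add: Delta_gen_B ext_phiR_tens)
  also have "\<dots> = (\<Sum>bs\<in>B N u. if bs = [(u, i)] then Y i u else 0)"
  proof (rule sum.cong[OF refl])
    fix bs assume bs: "bs \<in> B N u"
    then have c: "concat (map fst bs) = u" by (auto simp: B_def)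
    then have "bs \<noteq> []" using u by auto
    then have "Poly_Mapping.lookup (Y i (map snd bs)) [] = (if map snd bs = [i] then 1 else 0)"
      by (simp add: eps_Y)
    moreover have "map snd bs = [i] \<longleftrightarrow> bs = [(u, i)]"
      using c by (cases bs) auto
    ultimately show "sc (Poly_Mapping.lookup (Y i (map snd bs)) []) (Pb bs) = (if bs = [(u, i)] then Y i u else 0)"
      by (auto simp: Pb_Cons)
  qed
  also have "\<dots> = Y i u"
  proof -
    have "[(u, i)] \<in> B N u" using u by (auto simp: B_def)
    then show ?thesis by (simp add: sum.delta' finite_B)
  qed
  finally show ?thesis using u by (simp add: Y_ge2)
qed

lemma phiL_hom: "phiL (opP p q) = gbin (@) (phiL p) (phiL q)"
  by (simp add: phiL_def opP_def)

lemma phiR_hom: "phiR (opP p q) = gbin (@) (phiR p) (phiR q)"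
  by (simp add: phiR_def opP_def)

lemma EL: "valid_mon N m \<Longrightarrow> ext phiL (Delta_mon N m) = Poly_Mapping.single m 1"
proof (induction m)
  case Nil
  then show ?case by (simp add: hhone_def phiL_def)
next
  case (Cons g m)
  have "Delta_mon N (g # m) = gbin opP (Delta_mon N [g]) (Delta_mon N m)"
    using Delta_mon_append[of N "[g]" m] by (simp add: hhmult_gbin)
  then have "ext phiL (Delta_mon N (g # m)) = gbin (@) (ext phiL (Delta_gen N g)) (ext phiL (Delta_mon N m))"
    by (simp add: ext_hom[OF phiL_hom])
  moreover have "ext phiL (Delta_gen N g) = Poly_Mapping.single [g] 1"
    using Cons.prems EL_gen[of N "fst g" "snd g"] by (simp add: valid_mon_def)
  ultimately show ?case using Cons by (simp add: valid_mon_def)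
qed

lemma ER: "valid_mon N m \<Longrightarrow> ext phiR (Delta_mon N m) = Poly_Mapping.single m 1"
proof (induction m)
  case Nil
  then show ?case by (simp add: hhone_def phiR_def)
next
  case (Cons g m)
  have "Delta_mon N (g # m) = gbin opP (Delta_mon N [g]) (Delta_mon N m)"
    using Delta_mon_append[of N "[g]" m] by (simp add: hhmult_gbin)
  then have "ext phiR (Delta_mon N (g # m)) = gbin (@) (ext phiR (Delta_gen N g)) (ext phiR (Delta_mon N m))"
    by (simp add: ext_hom[OF phiR_hom])
  moreover have "ext phiR (Delta_gen N g) = Poly_Mapping.single [g] 1"
    using Cons.prems ER_gen[of N "fst g" "snd g"] by (simp add: valid_mon_def)
  ultimately show ?case using Cons by (simp add: valid_mon_def)
qed


definition deg :: "mon \<Rightarrow> nat" where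
  "deg m = sum_list (map (\<lambda>g. length (snd g) - 1) m)"

lemma deg_Nil [simp]: "deg [] = 0" by (simp add: deg_def)
lemma deg_Cons [simp]: "deg (g # m) = (length (snd g) - 1) + deg m" by (simp add: deg_def)
lemma deg_append [simp]: "deg (a @ b) = deg a + deg b" by (simp add: deg_def)

lemma deg_pos: "valid_mon N m \<Longrightarrow> m \<noteq> [] \<Longrightarrow> 1 \<le> deg m"
  by (cases m) (auto simp: valid_mon_def valid_gen_def)

lemma keys_Y:
  assumes "c \<in> {1..N}" "w \<noteq> []" "set w \<subseteq> {1..N}" "x \<in> Poly_Mapping.keys (Y c w)"
  shows "valid_mon N x \<and> deg x + 1 = length w"
proof (cases "2 \<le> length w")
  case True
  then have "x = [(c, w)]" using assms(4) by (simp add: Y_ge2)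
  then show ?thesis using True assms by (simp add: valid_mon_def valid_gen_def)
next
  case False
  with assms obtain j where w: "w = [j]" by (cases w) (auto simp: Suc_le_eq)
  then have "x = []" using assms(4) by (auto simp: Y_single hone_def split: if_splits)
  then show ?thesis using w by (simp add: valid_mon_def)
qed

lemma keys_hmult: "x \<in> Poly_Mapping.keys (hmult a b) \<Longrightarrow> \<exists>y z. y \<in> Poly_Mapping.keys a \<and> z \<in> Poly_Mapping.keys b \<and> x = y @ z"
  using keys_gbin[of "(@)" a b] unfolding hmult_gbin by blast

lemma keys_Pb:
  assumes "\<forall>b\<in>set bs. fst b \<noteq> [] \<and> set (fst b) \<subseteq> {1..N} \<and> snd b \<in> {1..N}"
    and "x \<in> Poly_Mapping.keys (Pb bs)"
  shows "valid_mon N x \<and> deg x + length bs = length (concat (map fst bs))"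
  using assms
proof (induction bs arbitrary: x)
  case Nil
  then show ?case by (simp add: hone_def valid_mon_def)
next
  case (Cons b bs)
  from Cons.prems(2) obtain y z where y: "y \<in> Poly_Mapping.keys (Y (snd b) (fst b))"
    and z: "z \<in> Poly_Mapping.keys (Pb bs)" and x: "x = y @ z"
    by (auto simp: Pb_Cons dest: keys_hmult)
  have "valid_mon N y \<and> deg y + 1 = length (fst b)"
    using Cons.prems(1) y by (intro keys_Y) auto
  moreover have "valid_mon N z \<and> deg z + length bs = length (concat (map fst bs))"
    using Cons.prems(1) z by (intro Cons.IH) auto
  ultimately show ?case using x by (auto simp: valid_mon_def)
qed

lemma keys_tens: "p \<in> Poly_Mapping.keys (tens a b) \<Longrightarrow> fst p \<in> Poly_Mapping.keys a \<and> snd p \<in> Poly_Mapping.keys b"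
  using keys_gbin[of Pair a b] unfolding tens_gbin by auto

lemma keys_Delta_gen:
  assumes "valid_gen N (i, u)" "p \<in> Poly_Mapping.keys (Delta_gen N (i, u))"
  shows "valid_mon N (fst p) \<and> valid_mon N (snd p) \<and> deg (fst p) + deg (snd p) + 1 = length u"
proof -
  have u: "set u \<subseteq> {1..N}" "2 \<le> length u" "i \<in> {1..N}" using assms by (auto simp: valid_gen_def)
  have "p \<in> (\<Union>bs\<in>B N u. Poly_Mapping.keys (tens (Pb bs) (Y i (map snd bs))))"
    using assms(2) unfolding Delta_gen_B by (rule subsetD[OF keys_sum_sub])
  then obtain bs where bs: "bs \<in> B N u" and p: "p \<in> Poly_Mapping.keys (tens (Pb bs) (Y i (map snd bs)))"
    by (rule UN_E)
  have bsu: "concat (map fst bs) = u" and bsv: "\<forall>b\<in>set bs. fst b \<noteq> [] \<and> snd b \<in> {1..N}"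
    using bs by (auto simp: B_def)
  have bsv': "\<forall>b\<in>set bs. fst b \<noteq> [] \<and> set (fst b) \<subseteq> {1..N} \<and> snd b \<in> {1..N}"
  proof
    fix b assume b: "b \<in> set bs"
    have "set (fst b) \<subseteq> set (concat (map fst bs))" using b by auto
    then show "fst b \<noteq> [] \<and> set (fst b) \<subseteq> {1..N} \<and> snd b \<in> {1..N}" using bsv b bsu u(1) by auto
  qed
  have ne: "map snd bs \<noteq> []" using bsu u by auto
  have sn: "set (map snd bs) \<subseteq> {1..N}" using bsv by auto
  have pk: "fst p \<in> Poly_Mapping.keys (Pb bs)" "snd p \<in> Poly_Mapping.keys (Y i (map snd bs))"
    using keys_tens[OF p] by auto
  have 1: "valid_mon N (fst p) \<and> deg (fst p) + length bs = length u"
    using keys_Pb[OF bsv' pk(1)] bsu by simp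
  have 2: "valid_mon N (snd p) \<and> deg (snd p) + 1 = length bs"
    using keys_Y[OF u(3) ne sn pk(2)] by simp
  show ?thesis using 1 2 by auto
qed

lemma keys_Delta_mon:
  assumes "valid_mon N m" "p \<in> Poly_Mapping.keys (Delta_mon N m)"
  shows "valid_mon N (fst p) \<and> valid_mon N (snd p) \<and> deg (fst p) + deg (snd p) = deg m"
  using assms
proof (induction m arbitrary: p)
  case Nil
  then show ?case by (simp add: hhone_def valid_mon_def)
next
  case (Cons g m)
  have "Delta_mon N (g # m) = gbin opP (Delta_gen N g) (Delta_mon N m)"
    using Delta_mon_append[of N "[g]" m] by (simp add: hhmult_gbin)
  with Cons.prems(2) obtain q r where q: "q \<in> Poly_Mapping.keys (Delta_gen N g)"
    and r: "r \<in> Poly_Mapping.keys (Delta_mon N m)" and p: "p = opP q r"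
    using keys_gbin[of opP "Delta_gen N g" "Delta_mon N m"] by auto
  have vg: "valid_gen N g" and vm: "valid_mon N m" using Cons.prems by (auto simp: valid_mon_def)
  have Q: "valid_mon N (fst q) \<and> valid_mon N (snd q) \<and> deg (fst q) + deg (snd q) + 1 = length (snd g)"
    using keys_Delta_gen[of N "fst g" "snd g" q] vg q by simp
  have R: "valid_mon N (fst r) \<and> valid_mon N (snd r) \<and> deg (fst r) + deg (snd r) = deg m"
    using Cons.IH[OF vm r] .
  show ?case using Q R p by (auto simp: opP_def valid_mon_def)
qed

lemma keys_Delta_deg:
  assumes "valid_mon N m" "p \<in> Poly_Mapping.keys (Delta_mon N m)" "fst p \<noteq> []"
  shows "valid_mon N (snd p) \<and> deg (snd p) < deg m"
  using keys_Delta_mon[OF assms(1,2)] deg_pos[of N "fst p"] assms(3) by auto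

section \<open>Convolution\<close>

definition conv :: "nat \<Rightarrow> (mon \<Rightarrow> hel) \<Rightarrow> (mon \<Rightarrow> hel) \<Rightarrow> mon \<Rightarrow> hel" where
  "conv N f g m = ext (\<lambda>p. hmult (f (fst p)) (g (snd p))) (Delta_mon N m)"

definition eu :: "mon \<Rightarrow> hel" where
  "eu m = (if m = [] then hone else 0)"

definition idm :: "mon \<Rightarrow> hel" where
  "idm m = Poly_Mapping.single m 1"

lemma ext_gbin_single_right: "ext \<Phi> (gbin op X (Poly_Mapping.single c 1)) = ext (\<lambda>q. \<Phi> (op q c)) X"
  by (simp add: gbin_def ext_ext)

lemma ext_gbin_single_left: "ext \<Phi> (gbin op (Poly_Mapping.single a 1) X) = ext (\<lambda>q. \<Phi> (op a q)) X"
  by (simp add: gbin_def ext_ext)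

lemma conv_assoc:
  assumes "valid_mon N m"
  shows "conv N (conv N f g) h m = conv N f (conv N g h) m"
proof -
  define \<Phi> where "\<Phi> x = hmult (hmult (f (fst (fst x))) (g (snd (fst x)))) (h (snd x))" for x
  have 1: "conv N (conv N f g) h m = ext \<Phi> (D1 N m)"
    unfolding conv_def D1_def ext_ext ext_gbin_single_right
    by (rule ext_cong) (simp add: \<Phi>_def hmult_gbin gbin_ext_left)
  have 2: "conv N f (conv N g h) m = ext \<Phi> (D2 N m)"
    unfolding conv_def D2_def ext_ext ext_gbin_single_left
    by (rule ext_cong) (simp add: \<Phi>_def t2_def gbin_ext_right hmult_assoc[unfolded hmult_gbin] hmult_gbin)
  show ?thesis using 1 2 coassoc[OF assms] by simp
qed

lemma conv_cong:
  assumes "\<And>x. valid_mon N x \<Longrightarrow> f x = f' x" "\<And>x. valid_mon N x \<Longrightarrow> g x = g' x" "valid_mon N m"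
  shows "conv N f g m = conv N f' g' m"
  unfolding conv_def
  by (rule ext_cong) (use assms keys_Delta_mon[OF assms(3)] in auto)

lemma conv_eu_left:
  assumes "valid_mon N m"
  shows "conv N eu f m = f m"
proof -
  have "conv N eu f m = ext (\<lambda>p. ext f (phiL p)) (Delta_mon N m)"
    unfolding conv_def by (rule ext_cong) (simp add: eu_def phiL_def hmult_hone_left[unfolded hmult_gbin] hmult_gbin)
  also have "\<dots> = ext f (ext phiL (Delta_mon N m))" by (simp add: ext_ext)
  also have "\<dots> = f m" using EL[OF assms] by simp
  finally show ?thesis .
qed

lemma conv_eu_right:
  assumes "valid_mon N m"
  shows "conv N f eu m = f m"
proof -
  have "conv N f eu m = ext (\<lambda>p. ext f (phiR p)) (Delta_mon N m)"
    unfolding conv_def by (rule ext_cong) (simp add: eu_def phiR_def hmult_hone_right[unfolded hmult_gbin] hmult_gbin)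
  also have "\<dots> = ext f (ext phiR (Delta_mon N m))" by (simp add: ext_ext)
  also have "\<dots> = f m" using ER[OF assms] by simp
  finally show ?thesis .
qed

section \<open>Right inverse of the identity\<close>

primrec Rn :: "nat \<Rightarrow> nat \<Rightarrow> mon \<Rightarrow> hel" where
  "Rn N 0 m = 0"
| "Rn N (Suc n) m = eu m - ext (\<lambda>p. if fst p = [] then 0
      else hmult (Poly_Mapping.single (fst p) 1) (Rn N n (snd p))) (Delta_mon N m)"

definition Rf :: "nat \<Rightarrow> mon \<Rightarrow> hel" where
  "Rf N m = Rn N (Suc (deg m)) m"

lemma Rn_stable: "valid_mon N m \<Longrightarrow> deg m < n \<Longrightarrow> Rn N n m = Rf N m"
proof (induction n arbitrary: m rule: less_induct)
  case (less n)
  then obtain n' where n: "n = Suc n'" by (cases n) auto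
  have key: "(if fst p = [] then 0 else hmult (Poly_Mapping.single (fst p) 1) (Rn N n' (snd p))) =
      (if fst p = [] then 0 else hmult (Poly_Mapping.single (fst p) 1) (Rn N (deg m) (snd p)))"
    if p: "p \<in> Poly_Mapping.keys (Delta_mon N m)" for p
  proof (cases "fst p = []")
    case False
    then have v: "valid_mon N (snd p)" "deg (snd p) < deg m"
      using keys_Delta_deg[OF less.prems(1) p] by auto
    have "Rn N n' (snd p) = Rf N (snd p)"
      using less.IH[of n' "snd p"] v less.prems n by auto
    moreover have "Rn N (deg m) (snd p) = Rf N (snd p)"
      using less.IH[of "deg m" "snd p"] v less.prems n by auto
    ultimately show ?thesis by simp
  qed simp
  have "Rn N n m = Rn N (Suc (deg m)) m"
    unfolding n Rn.simps by (subst ext_cong[OF key]) auto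
  then show ?case by (simp add: Rf_def)
qed

lemma R_right:
  assumes "valid_mon N m"
  shows "conv N idm (Rf N) m = eu m"
proof -
  let ?G = "\<lambda>p. if fst p = [] then 0 else hmult (Poly_Mapping.single (fst p) 1) (Rn N (deg m) (snd p))"
  have "conv N idm (Rf N) m = ext (\<lambda>p. ext (Rf N) (phiL p) + ?G p) (Delta_mon N m)"
    unfolding conv_def idm_def
  proof (rule ext_cong)
    fix p assume p: "p \<in> Poly_Mapping.keys (Delta_mon N m)"
    show "hmult (Poly_Mapping.single (fst p) 1) (Rf N (snd p)) = ext (Rf N) (phiL p) + ?G p"
    proof (cases "fst p = []")
      case True
      then show ?thesis by (simp add: phiL_def hone_def[symmetric])
    next
      case False
      then have "Rn N (deg m) (snd p) = Rf N (snd p)"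
        using keys_Delta_deg[OF assms p] by (intro Rn_stable) auto
      then show ?thesis using False by (simp add: phiL_def)
    qed
  qed
  also have "\<dots> = ext (Rf N) (ext phiL (Delta_mon N m)) + ext ?G (Delta_mon N m)"
    by (simp add: ext_fadd ext_ext)
  also have "\<dots> = Rf N m + (eu m - Rf N m)"
    using EL[OF assms] by (simp add: Rf_def)
  finally show ?thesis by simp
qed

lemma unique_left:
  assumes "\<And>x. valid_mon N x \<Longrightarrow> conv N s idm x = eu x" "valid_mon N m"
  shows "s m = Rf N m"
proof -
  have "s m = conv N s eu m" using conv_eu_right[OF assms(2)] by simp
  also have "\<dots> = conv N s (conv N idm (Rf N)) m"
    by (rule conv_cong) (use R_right assms(2) in auto)
  also have "\<dots> = conv N (conv N s idm) (Rf N) m" by (rule conv_assoc[symmetric]) (rule assms(2))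
  also have "\<dots> = conv N eu (Rf N) m"
    by (rule conv_cong) (use assms in auto)
  also have "\<dots> = Rf N m" by (rule conv_eu_left) (rule assms(2))
  finally show ?thesis .
qed



section \<open>Trees\<close>

lemma leaf_word_ne: "leaf_word t \<noteq> []"
proof (induction t)
  case (Node c ts)
  show ?case
  proof (cases ts)
    case (Cons t ts')
    then have "leaf_word t \<noteq> []" using Node by simp
    then show ?thesis using Cons by simp
  qed simp
qed

lemma RT_single: "RT N c [j] = (if c = j \<and> c \<in> {1..N} then {Node c []} else {})"
proof -
  have "T \<in> RT N c [j] \<longleftrightarrow> c = j \<and> c \<in> {1..N} \<and> T = Node c []" for T
  proof (cases T)
    case (Node c' ts)
    show ?thesis
    proof (cases ts)
      case Nil
      then show ?thesis using Node by (auto simp: RT_def)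
    next
      case (Cons t ts')
      have "T \<notin> RT N c [j]"
      proof
        assume T: "T \<in> RT N c [j]"
        then have r: "2 \<le> length ts" using Node Cons by (auto simp: RT_def)
        have "length ts \<le> length (concat (map leaf_word ts))"
          using length_le_concat[of "map leaf_word ts"] leaf_word_ne by auto
        moreover have "concat (map leaf_word ts) = [j]" using T Node Cons by (simp add: RT_def)
        ultimately show False using r by simp
      qed
      then show ?thesis using Node Cons by auto
    qed
  qed
  then show ?thesis by auto
qed

definition TS :: "nat \<Rightarrow> nat \<Rightarrow> nat list \<Rightarrow> hel" where
  "TS N c w = (\<Sum>T\<in>RT N c w. sc ((-1) ^ nvert T) (Lambda_r T))"

lemma TS_single: "TS N c [j] = (if c = j \<and> c \<in> {1..N} then hone else 0)"
  by (simp add: TS_def RT_single Lambda_r_def)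

lemma RT_Nil: "RT N c [] = {}"
  using leaf_word_ne by (auto simp: RT_def)

definition RTS :: "nat \<Rightarrow> nat list \<Rightarrow> ((nat list \<times> nat) list \<times> ctree list) set" where
  "RTS N u = Sigma {bs \<in> B N u. 2 \<le> length bs} (LS (\<lambda>b. RT N (snd b) (fst b)))"

lemma LS_RT_mem: "ts \<in> LS (\<lambda>b. RT N (snd b) (fst b)) bs \<longleftrightarrow>
   length ts = length bs \<and> (\<forall>k<length bs. ts ! k \<in> RT N (snd (bs ! k)) (fst (bs ! k)))"
  by (auto simp: LS_def list_all2_conv_all_nth)

lemma RT_sub:
  assumes "2 \<le> length u"
  shows "RT N i u \<subseteq> (\<lambda>(bs, ts). Node i ts) ` RTS N u"
proof
  fix T assume T: "T \<in> RT N i u"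
  obtain c ts where Tn: "T = Node c ts" by (cases T)
  have c: "c = i" using T Tn by (simp add: RT_def)
  have "ts \<noteq> []" using T Tn assms by (auto simp: RT_def)
  then have red: "2 \<le> length ts" "\<forall>t\<in>set ts. reduced t" and col: "\<forall>t\<in>set ts. colors t \<subseteq> {1..N}"
    and lw: "concat (map leaf_word ts) = u"
    using T Tn by (auto simp: RT_def)
  let ?bs = "map (\<lambda>t. (leaf_word t, root_color t)) ts"
  have rc: "root_color t \<in> colors t" for t by (cases t) simp
  have "?bs \<in> B N u"
    using lw col leaf_word_ne rc by (fastforce simp: B_def comp_def)
  moreover have "ts \<in> LS (\<lambda>b. RT N (snd b) (fst b)) ?bs"
    unfolding LS_RT_mem using red col by (auto simp: RT_def)
  ultimately have "(?bs, ts) \<in> RTS N u" using red by (simp add: RTS_def)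
  then show "T \<in> (\<lambda>(bs, ts). Node i ts) ` RTS N u" using Tn c by force
qed

lemma RT_super:
  assumes "i \<in> {1..N}" "x \<in> RTS N u"
  shows "(case x of (bs, ts) \<Rightarrow> Node i ts) \<in> RT N i u"
proof -
  obtain bs ts where x: "x = (bs, ts)" by (cases x)
  have bs: "bs \<in> B N u" "2 \<le> length bs" and ts: "ts \<in> LS (\<lambda>b. RT N (snd b) (fst b)) bs"
    using assms(2) x by (auto simp: RTS_def)
  have l: "length ts = length bs" and tk: "\<And>k. k < length bs \<Longrightarrow> ts ! k \<in> RT N (snd (bs ! k)) (fst (bs ! k))"
    using ts by (auto simp: LS_RT_mem)
  have "map leaf_word ts = map fst bs"
    by (rule nth_equalityI) (use l tk in \<open>auto simp: RT_def\<close>)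
  then have lw: "concat (map leaf_word ts) = u" using bs by (simp add: B_def)
  have "\<forall>t\<in>set ts. reduced t \<and> colors t \<subseteq> {1..N}"
  proof
    fix t assume "t \<in> set ts"
    then obtain k where "k < length ts" "ts ! k = t" by (auto simp: in_set_conv_nth)
    then show "reduced t \<and> colors t \<subseteq> {1..N}" using tk[of k] l by (auto simp: RT_def)
  qed
  then show ?thesis using x bs l lw assms(1) by (auto simp: RT_def)
qed

lemma RT_eq:
  assumes "i \<in> {1..N}" "2 \<le> length u"
  shows "RT N i u = (\<lambda>(bs, ts). Node i ts) ` RTS N u"
  using RT_sub[OF assms(2)] RT_super[OF assms(1)] by blast

lemma RTS_inj: "inj_on (\<lambda>(bs, ts). Node i ts) (RTS N u)"
proof (rule inj_onI)
  fix x y assume x: "x \<in> RTS N u" and y: "y \<in> RTS N u"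
    and e: "(case x of (bs, ts) \<Rightarrow> Node i ts) = (case y of (bs, ts) \<Rightarrow> Node i ts)"
  obtain bs ts where xx: "x = (bs, ts)" by (cases x)
  obtain bs' ts' where yy: "y = (bs', ts')" by (cases y)
  have tt: "ts = ts'" using e xx yy by simp
  have det: "bs = map (\<lambda>t. (leaf_word t, root_color t)) ts" if "(bs, ts) \<in> RTS N u" for bs ts
  proof -
    have l: "length ts = length bs" and tk: "\<And>k. k < length bs \<Longrightarrow> ts ! k \<in> RT N (snd (bs ! k)) (fst (bs ! k))"
      using that by (auto simp: RTS_def LS_RT_mem)
    show ?thesis by (rule nth_equalityI) (use l tk in \<open>auto simp: RT_def prod_eq_iff\<close>)
  qed
  show "x = y" using det[of bs ts] det[of bs' ts'] x y xx yy tt by simp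
qed

lemma block_shorter:
  assumes "b \<in> set bs" "2 \<le> length bs" "\<forall>b\<in>set bs. fst b \<noteq> []"
  shows "length (fst b) < length (concat (map fst bs))"
proof -
  have "length (concat (map fst bs)) = sum_list (map (length \<circ> fst) bs)" by (simp add: length_concat)
  also have "\<dots> = length (fst b) + sum_list (map (length \<circ> fst) (remove1 b bs))"
    using assms(1) by (simp add: sum_list_map_remove1)
  finally have e: "length (concat (map fst bs)) = length (fst b) + sum_list (map (length \<circ> fst) (remove1 b bs))" .
  have "length (remove1 b bs) \<ge> 1" using assms(1,2) by (simp add: length_remove1)
  then obtain x where x: "x \<in> set (remove1 b bs)" by (cases "remove1 b bs") auto
  then have "x \<in> set bs" using set_remove1_subset[of b bs] by blast
  then have "1 \<le> length (fst x)" using assms(3) by (simp add: Suc_le_eq)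
  moreover have "length (fst x) \<le> sum_list (map (length \<circ> fst) (remove1 b bs))"
    using x by (simp add: member_le_sum_list)
  ultimately show ?thesis using e by simp
qed

lemma finite_RT: "finite (RT N c w)"
proof (induction "length w" arbitrary: c w rule: less_induct)
  case less
  show ?case
  proof (cases "2 \<le> length w")
    case True
    have "finite (RTS N w)"
      unfolding RTS_def
    proof (rule finite_SigmaI)
      show "finite {bs \<in> B N w. 2 \<le> length bs}" using finite_B by simp
      fix bs assume bs: "bs \<in> {bs \<in> B N w. 2 \<le> length bs}"
      show "finite (LS (\<lambda>b. RT N (snd b) (fst b)) bs)"
      proof (rule finite_LS)
        fix b assume b: "b \<in> set bs"
        have "length (fst b) < length w"
          using block_shorter[OF b] bs by (auto simp: B_def)
        then show "finite (RT N (snd b) (fst b))" by (rule less)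
      qed
    qed
    then show ?thesis using RT_sub[OF True] finite_subset by blast
  next
    case False
    then consider "w = []" | j where "w = [j]" by (cases w) (auto simp: Suc_le_eq)
    then show ?thesis by cases (auto simp: RT_Nil RT_single)
  qed
qed

lemma hprod_map_concat: "hprod (map f (concat xss)) = hprod (map (\<lambda>xs. hprod (map f xs)) xss)"
  by (induction xss) (simp_all add: hprod_append hprod_Cons)

lemma hprod_sc: "hprod (map (\<lambda>t. sc (c t) (X t)) xs) = sc (prod_list (map c xs)) (hprod (map X xs))"
  by (induction xs) (simp_all add: hprod_Cons hmult_gbin mult.commute)

lemma prod_list_rev_map: "prod_list (map f (rev xs)) = prod_list (map f xs)" for f :: "'a \<Rightarrow> complex"
  by (induction xs) (simp_all add: mult.commute)

lemma sum_list_rev_map: "sum_list (map f (rev xs)) = sum_list (map f xs)" for f :: "'a \<Rightarrow> nat"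
  by (induction xs) simp_all

lemma prod_list_sign: "prod_list (map (\<lambda>t. (-1::complex) ^ nvert t) ts) = (-1) ^ sum_list (map nvert ts)"
  by (induction ts) (simp_all add: power_add)

definition Ft :: "ctree \<Rightarrow> hel" where
  "Ft T = sc ((-1) ^ nvert T) (Lambda_r T)"

lemma Ft_Node:
  assumes "ts \<noteq> []"
  shows "Ft (Node i ts) = - hmult (hprod (map Ft (rev ts))) (Y i (map root_color ts))"
proof -
  have m: "map Lambda_r xs = map (\<lambda>x. hprod (map (\<lambda>(x, y). Y x y) (inner_r x))) xs" for xs
    by (simp add: Lambda_r_def)
  have L: "Lambda_r (Node i ts) = hmult (hprod (map Lambda_r (rev ts))) (Y i (map root_color ts))"
    using assms unfolding m by (simp add: Lambda_r_def hprod_append hprod_map_concat hprod_Cons rev_map comp_def)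
  have "hprod (map Ft (rev ts)) = sc ((-1) ^ sum_list (map nvert ts)) (hprod (map Lambda_r (rev ts)))"
    unfolding Ft_def hprod_sc prod_list_sign by (simp add: sum_list_rev_map)
  then show ?thesis
    using assms by (simp add: Ft_def L hmult_gbin sc_neg1[symmetric])
qed

lemma sum_LS_rev:
  assumes "\<And>b. b \<in> set bs \<Longrightarrow> finite (A b)"
  shows "(\<Sum>ts\<in>LS A bs. hprod (map F (rev ts))) = hprod (map (\<lambda>b. \<Sum>t\<in>A b. F t) (rev bs))"
proof -
  have "hprod (map (\<lambda>b. \<Sum>t\<in>A b. F t) (rev bs)) = (\<Sum>ts'\<in>LS A (rev bs). hprod (map (\<lambda>(b, t). F t) (zip (rev bs) ts')))"
    by (rule hprod_sum) (use assms in auto)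
  also have "\<dots> = (\<Sum>ts'\<in>LS A (rev bs). hprod (map F ts'))"
  proof (rule sum.cong[OF refl])
    fix ts' assume "ts' \<in> LS A (rev bs)"
    then have "length ts' = length (rev bs)" by (auto simp: LS_def dest: list_all2_lengthD)
    moreover have "map (\<lambda>(b, t). F t) (zip (rev bs) ts') = map F (map snd (zip (rev bs) ts'))"
      by (simp add: split_def)
    ultimately have "map (\<lambda>(b, t). F t) (zip (rev bs) ts') = map F ts'" by simp
    then show "hprod (map (\<lambda>(b, t). F t) (zip (rev bs) ts')) = hprod (map F ts')" by simp
  qed
  also have "LS A (rev bs) = rev ` LS A bs"
  proof (intro equalityI subsetI)
    fix ts' assume "ts' \<in> LS A (rev bs)"
    then have "rev ts' \<in> LS A bs" by (simp add: LS_def list_all2_rev1)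
    then show "ts' \<in> rev ` LS A bs" by (metis image_eqI rev_rev_ident)
  next
    fix ts' assume "ts' \<in> rev ` LS A bs"
    then obtain ts where "ts \<in> LS A bs" "ts' = rev ts" by blast
    then show "ts' \<in> LS A (rev bs)" by (simp add: LS_def)
  qed
  also have "(\<Sum>ts'\<in>rev ` LS A bs. hprod (map F ts')) = (\<Sum>ts\<in>LS A bs. hprod (map F (rev ts)))"
    by (subst sum.reindex) (auto simp: inj_on_def)
  finally show ?thesis by simp
qed

lemma TS_rec:
  assumes "i \<in> {1..N}" "2 \<le> length u"
  shows "TS N i u = - (\<Sum>bs\<in>{bs \<in> B N u. 2 \<le> length bs}.
      hmult (hprod (map (\<lambda>b. TS N (snd b) (fst b)) (rev bs))) (Y i (map snd bs)))"
proof -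
  have "TS N i u = (\<Sum>T\<in>RT N i u. Ft T)" by (simp add: TS_def Ft_def)
  also have "\<dots> = (\<Sum>x\<in>RTS N u. Ft (case x of (bs, ts) \<Rightarrow> Node i ts))"
    unfolding RT_eq[OF assms] by (subst sum.reindex[OF RTS_inj]) (simp add: comp_def)
  also have "\<dots> = (\<Sum>(bs, ts)\<in>RTS N u. - hmult (hprod (map Ft (rev ts))) (Y i (map snd bs)))"
  proof (rule sum.cong[OF refl])
    fix x assume x: "x \<in> RTS N u"
    obtain bs ts where xx: "x = (bs, ts)" by (cases x)
    have bs: "2 \<le> length bs" and l: "length ts = length bs"
      and tk: "\<And>k. k < length bs \<Longrightarrow> ts ! k \<in> RT N (snd (bs ! k)) (fst (bs ! k))"
      using x xx by (auto simp: RTS_def LS_RT_mem)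
    have ne: "ts \<noteq> []" using bs l by auto
    have "map root_color ts = map snd bs"
      by (rule nth_equalityI) (use l tk in \<open>auto simp: RT_def\<close>)
    then show "Ft (case x of (bs, ts) \<Rightarrow> Node i ts) = (case x of (bs, ts) \<Rightarrow> - hmult (hprod (map Ft (rev ts))) (Y i (map snd bs)))"
      using xx Ft_Node[OF ne] by simp
  qed
  also have "\<dots> = (\<Sum>bs\<in>{bs \<in> B N u. 2 \<le> length bs}. \<Sum>ts\<in>LS (\<lambda>b. RT N (snd b) (fst b)) bs.
       - hmult (hprod (map Ft (rev ts))) (Y i (map snd bs)))"
    unfolding RTS_def
    by (rule sum.Sigma[symmetric]) (auto intro!: finite_LS finite_RT simp: finite_B)
  also have "\<dots> = (\<Sum>bs\<in>{bs \<in> B N u. 2 \<le> length bs}.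
       - hmult (hprod (map (\<lambda>b. TS N (snd b) (fst b)) (rev bs))) (Y i (map snd bs)))"
  proof (rule sum.cong[OF refl])
    fix bs
    have "(\<Sum>ts\<in>LS (\<lambda>b. RT N (snd b) (fst b)) bs. hprod (map Ft (rev ts))) =
        hprod (map (\<lambda>b. \<Sum>t\<in>RT N (snd b) (fst b). Ft t) (rev bs))"
      by (rule sum_LS_rev) (rule finite_RT)
    then show "(\<Sum>ts\<in>LS (\<lambda>b. RT N (snd b) (fst b)) bs. - hmult (hprod (map Ft (rev ts))) (Y i (map snd bs))) =
       - hmult (hprod (map (\<lambda>b. TS N (snd b) (fst b)) (rev bs))) (Y i (map snd bs))"
      by (simp add: sum_negf hmult_gbin gbin_sum_left[symmetric] TS_def Ft_def)
  qed
  finally show ?thesis by (simp add: sum_negf)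
qed



section \<open>The explicit antipode\<close>

definition sm :: "nat \<Rightarrow> mon \<Rightarrow> hel" where
  "sm N m = hprod (map (\<lambda>g. TS N (fst g) (snd g)) (rev m))"

lemma sm_append: "sm N (a @ b) = hmult (sm N b) (sm N a)"
  by (simp add: sm_def hprod_append)

lemma sm_Nil [simp]: "sm N [] = hone" by (simp add: sm_def)

lemma gbin_flip: "gbin (\<lambda>a b. op b a) X1 X2 = gbin op X2 X1"
  unfolding gbin_def by (rule ext_swap)

lemma ext_sm_hmult: "ext (sm N) (hmult x y) = hmult (ext (sm N) y) (ext (sm N) x)"
proof -
  have "ext (sm N) (gbin (@) x y) = gbin (\<lambda>a b. b @ a) (ext (sm N) x) (ext (sm N) y)"
    by (rule ext_hom) (simp only: sm_append hmult_gbin gbin_flip[of "(@)"])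
  then show ?thesis by (simp only: hmult_gbin gbin_flip[of "(@)"])
qed

lemma ext_sm_hone [simp]: "ext (sm N) hone = hone"
  by (simp add: hone_def)

lemma ext_sm_hprod: "ext (sm N) (hprod xs) = hprod (map (ext (sm N)) (rev xs))"
  by (induction xs) (simp_all add: hprod_Cons ext_sm_hmult hprod_append)

lemma ext_sm_Y:
  assumes "c \<in> {1..N}" "w \<noteq> []"
  shows "ext (sm N) (Y c w) = TS N c w"
proof (cases "2 \<le> length w")
  case True
  then show ?thesis by (simp add: Y_ge2 sm_def hprod_Cons)
next
  case False
  with assms obtain j where "w = [j]" by (cases w) (auto simp: Suc_le_eq)
  then show ?thesis using assms by (simp add: Y_single TS_single)
qed

lemma B_short:
  assumes "u \<noteq> []"
  shows "B N u - {bs. 2 \<le> length bs} = (\<lambda>c. [(u, c)]) ` {1..N}"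
proof (intro equalityI subsetI)
  fix bs assume bs: "bs \<in> B N u - {bs. 2 \<le> length bs}"
  then have c: "concat (map fst bs) = u" and v: "\<forall>b\<in>set bs. fst b \<noteq> [] \<and> snd b \<in> {1..N}"
    and l: "length bs < 2" by (auto simp: B_def)
  then have "bs \<noteq> []" using assms by auto
  with l obtain b where b: "bs = [b]" by (cases bs) (auto simp: Suc_le_eq)
  then have "fst b = u" "snd b \<in> {1..N}" using c v by auto
  then show "bs \<in> (\<lambda>c. [(u, c)]) ` {1..N}" using b by (cases b) auto
qed (use assms in \<open>auto simp: B_def\<close>)

lemma conv_sm_gen:
  assumes "valid_gen N (i, u)"
  shows "conv N (sm N) idm [(i, u)] = 0"
proof -
  have u: "set u \<subseteq> {1..N}" "2 \<le> length u" "i \<in> {1..N}" "u \<noteq> []" using assms by (auto simp: valid_gen_def)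
  define G where "G bs = hmult (hprod (map (\<lambda>b. TS N (snd b) (fst b)) (rev bs))) (Y i (map snd bs))" for bs
  have "conv N (sm N) idm [(i, u)] = (\<Sum>bs\<in>B N u. hmult (ext (sm N) (Pb bs)) (Y i (map snd bs)))"
    unfolding conv_def idm_def Delta_mon_single Delta_gen_B ext_sum hmult_gbin
    by (simp add: ext_tens_gen[where F="sm N" and G="\<lambda>c. Poly_Mapping.single c 1"])
  also have "\<dots> = (\<Sum>bs\<in>B N u. G bs)"
  proof (rule sum.cong[OF refl])
    fix bs assume bs: "bs \<in> B N u"
    have "ext (sm N) (Pb bs) = hprod (map (\<lambda>b. ext (sm N) (Y (snd b) (fst b))) (rev bs))"
      by (simp add: Pb_def ext_sm_hprod rev_map comp_def)
    also have "\<dots> = hprod (map (\<lambda>b. TS N (snd b) (fst b)) (rev bs))"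
      by (rule arg_cong[where f=hprod], rule map_cong[OF refl]) (use bs in \<open>auto simp: B_def intro!: ext_sm_Y\<close>)
    finally show "hmult (ext (sm N) (Pb bs)) (Y i (map snd bs)) = G bs" by (simp add: G_def)
  qed
  also have "\<dots> = (\<Sum>bs\<in>B N u \<inter> {bs. 2 \<le> length bs}. G bs) + (\<Sum>bs\<in>B N u - {bs. 2 \<le> length bs}. G bs)"
    by (rule sum.Int_Diff) (rule finite_B)
  also have "B N u \<inter> {bs. 2 \<le> length bs} = {bs \<in> B N u. 2 \<le> length bs}" by auto
  also have "(\<Sum>bs\<in>{bs \<in> B N u. 2 \<le> length bs}. G bs) = - TS N i u"
    using TS_rec[OF u(3) u(2)] by (simp add: G_def)
  also have "(\<Sum>bs\<in>B N u - {bs. 2 \<le> length bs}. G bs) = (\<Sum>c\<in>{1..N}. G [(u, c)])"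
    unfolding B_short[OF u(4)] by (subst sum.reindex) (auto simp: inj_on_def)
  also have "\<dots> = (\<Sum>c\<in>{1..N}. if c = i then TS N i u else 0)"
    by (rule sum.cong[OF refl]) (simp add: G_def hprod_Cons Y_single hmult_hone_right[unfolded hmult_gbin] hmult_gbin)
  also have "\<dots> = TS N i u" using u(3) by (simp add: sum.delta')
  finally show ?thesis by simp
qed

lemma conv_sm:
  assumes "valid_mon N m"
  shows "conv N (sm N) idm m = eu m"
proof (cases m)
  case Nil
  then show ?thesis by (simp add: conv_def hhone_def idm_def eu_def hone_def hmult_gbin)
next
  case (Cons g m')
  obtain i u where g: "g = (i, u)" by (cases g)
  have vg: "valid_gen N (i, u)" using assms Cons g by (simp add: valid_mon_def)
  define \<psi> where "\<psi> p = hmult (sm N (fst p)) (idm (snd p))" for p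
  let ?X = "Delta_gen N g" and ?Y = "Delta_mon N m'"
  have D: "Delta_mon N m = gbin opP ?X ?Y"
    using Delta_mon_append[of N "[g]" m'] Cons by (simp add: hhmult_gbin)
  have X0: "ext \<psi> ?X = 0"
    using conv_sm_gen[OF vg] g by (simp add: conv_def \<psi>_def[abs_def])
  have psi: "\<psi> (opP p q) = hmult (sm N (fst q)) (hmult (\<psi> p) (Poly_Mapping.single (snd q) 1))" for p q
    by (simp add: \<psi>_def idm_def opP_def sm_append single_append hmult_gbin[symmetric] hmult_assoc)
  have "conv N (sm N) idm m = ext \<psi> (gbin opP ?X ?Y)"
    by (simp add: conv_def \<psi>_def[abs_def] D)
  also have "\<dots> = ext (\<lambda>p. ext (\<lambda>q. \<psi> (opP p q)) ?Y) ?X"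
    by (simp add: gbin_def ext_ext)
  also have "\<dots> = ext (\<lambda>q. ext (\<lambda>p. hmult (sm N (fst q)) (hmult (\<psi> p) (Poly_Mapping.single (snd q) 1))) ?X) ?Y"
    unfolding psi by (rule ext_swap)
  also have "\<dots> = ext (\<lambda>q. hmult (sm N (fst q)) (hmult (ext \<psi> ?X) (Poly_Mapping.single (snd q) 1))) ?Y"
    by (simp add: hmult_gbin gbin_ext_left gbin_ext_right)
  also have "\<dots> = 0" by (simp add: X0 hmult_gbin)
  finally show ?thesis using Cons by (simp add: eu_def)
qed

definition s0 :: "nat \<Rightarrow> mon \<Rightarrow> hel" where
  "s0 N m = (if valid_mon N m then sm N m else 0)"

lemma conv_s0: "valid_mon N m \<Longrightarrow> conv N (s0 N) idm m = eu m"
  using conv_cong[of N "s0 N" "sm N" idm idm m] conv_sm by (simp add: s0_def)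

lemma s0_Rf: "valid_mon N m \<Longrightarrow> s0 N m = Rf N m"
  by (rule unique_left) (use conv_s0 in auto)

lemma conv_right_s0: "valid_mon N m \<Longrightarrow> conv N idm (s0 N) m = eu m"
  using conv_cong[of N idm idm "s0 N" "Rf N" m] R_right s0_Rf by simp

lemma conv_left_ext: "conv_left N S x = ext (\<lambda>m. conv N (\<lambda>k. S (Poly_Mapping.single k 1)) idm m) x"
proof -
  have "conv_left N S x = ext (\<lambda>p. hmult (S (Poly_Mapping.single (fst p) 1)) (idm (snd p))) (Delta N x)"
    by (simp add: conv_left_def ext_def hscale_sc idm_def)
  also have "\<dots> = ext (\<lambda>m. conv N (\<lambda>k. S (Poly_Mapping.single k 1)) idm m) x"
    by (simp add: Delta_ext ext_ext conv_def)
  finally show ?thesis .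
qed

lemma conv_right_ext: "conv_right N S x = ext (\<lambda>m. conv N idm (\<lambda>k. S (Poly_Mapping.single k 1)) m) x"
proof -
  have "conv_right N S x = ext (\<lambda>p. hmult (idm (fst p)) (S (Poly_Mapping.single (snd p) 1))) (Delta N x)"
    by (simp add: conv_right_def ext_def hscale_sc idm_def)
  also have "\<dots> = ext (\<lambda>m. conv N idm (\<lambda>k. S (Poly_Mapping.single k 1)) m) x"
    by (simp add: Delta_ext ext_ext conv_def)
  finally show ?thesis .
qed

lemma ext_eu: "ext eu x = hscale (eps x) hone"
  unfolding eu_def eps_def hscale_sc by (rule ext_if_single)

lemma is_linear_ext: "is_linear S \<longleftrightarrow> (\<forall>x. S x = ext (\<lambda>m. S (Poly_Mapping.single m 1)) x)"
  by (simp add: is_linear_def ext_def hscale_sc)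

lemma antipode_eq: "antipode N = ext (s0 N)"
  unfolding antipode_def
proof (rule the_equality)
  let ?S = "ext (s0 N)"
  show "is_linear ?S \<and> (\<forall>m. \<not> valid_mon N m \<longrightarrow> ?S (Poly_Mapping.single m 1) = 0) \<and>
        (\<forall>x\<in>Hcarrier N. conv_left N ?S x = hscale (eps x) hone) \<and>
        (\<forall>x\<in>Hcarrier N. conv_right N ?S x = hscale (eps x) hone)"
  proof (intro conjI allI ballI impI)
    show "is_linear ?S" by (simp add: is_linear_ext)
    fix m assume "\<not> valid_mon N m"
    then show "?S (Poly_Mapping.single m 1) = 0" by (simp add: s0_def)
  next
    fix x assume x: "x \<in> Hcarrier N"
    have "conv_left N ?S x = ext eu x"
      unfolding conv_left_ext
    proof (rule ext_cong)
      fix m assume "m \<in> Poly_Mapping.keys x"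
      then have "valid_mon N m" using x by (simp add: Hcarrier_def)
      then show "conv N (\<lambda>k. ?S (Poly_Mapping.single k 1)) idm m = eu m" by (simp add: conv_s0)
    qed
    then show "conv_left N ?S x = hscale (eps x) hone" by (simp add: ext_eu)
  next
    fix x assume x: "x \<in> Hcarrier N"
    have "conv_right N ?S x = ext eu x"
      unfolding conv_right_ext
    proof (rule ext_cong)
      fix m assume "m \<in> Poly_Mapping.keys x"
      then have "valid_mon N m" using x by (simp add: Hcarrier_def)
      then show "conv N idm (\<lambda>k. ?S (Poly_Mapping.single k 1)) m = eu m" by (simp add: conv_right_s0)
    qed
    then show "conv_right N ?S x = hscale (eps x) hone" by (simp add: ext_eu)
  qed
next
  fix S assume S: "is_linear S \<and> (\<forall>m. \<not> valid_mon N m \<longrightarrow> S (Poly_Mapping.single m 1) = 0) \<and>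
        (\<forall>x\<in>Hcarrier N. conv_left N S x = hscale (eps x) hone) \<and>
        (\<forall>x\<in>Hcarrier N. conv_right N S x = hscale (eps x) hone)"
  note S1 = conjunct1[OF S] and S2 = conjunct1[OF conjunct2[OF S]]
    and S3 = conjunct1[OF conjunct2[OF conjunct2[OF S]]]
  define t where "t m = S (Poly_Mapping.single m 1)" for m
  have tt: "t = (\<lambda>m. S (Poly_Mapping.single m 1))" by (rule ext) (simp add: t_def)
  have "\<forall>x. S x = ext (\<lambda>m. S (Poly_Mapping.single m 1)) x" using S1 unfolding is_linear_ext .
  then have lin: "S x = ext t x" for x unfolding tt by (rule spec)
  have ct: "conv N t idm m = eu m" if m: "valid_mon N m" for m
  proof -
    have "Poly_Mapping.single m 1 \<in> Hcarrier N" using m by (simp add: Hcarrier_def)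
    then have "conv_left N S (Poly_Mapping.single m 1) = hscale (eps (Poly_Mapping.single m 1)) hone"
      using S3 by blast
    moreover have "conv_left N S (Poly_Mapping.single m 1) = conv N t idm m"
      by (simp only: conv_left_ext tt ext_single sc_1)
    moreover have "hscale (eps (Poly_Mapping.single m 1)) hone = eu m"
      by (simp add: eps_def hscale_sc eu_def lookup_single when_def)
    ultimately show ?thesis by simp
  qed
  have "t m = s0 N m" for m
  proof (cases "valid_mon N m")
    case True
    then show ?thesis using unique_left[of N t m] ct s0_Rf by simp
  next
    case False
    then show ?thesis using S2 by (simp add: t_def s0_def)
  qed
  then have "t = s0 N" by (rule ext)
  then show "S = ext (s0 N)" using lin by (intro ext) simp
qed

theorem corollary3:
  fixes N i :: nat and u :: "nat list"
  assumes "1 \<le> N" and "i \<in> {1..N}" and "set u \<subseteq> {1..N}" and "2 \<le> length u"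
  shows "antipode N (Y i u) = (\<Sum>T\<in>RT N i u. hscale ((-1) ^ nvert T) (Lambda_r T))"
proof -
  have v: "valid_mon N [(i, u)]" using assms by (simp add: valid_mon_def valid_gen_def)
  have "antipode N (Y i u) = s0 N [(i, u)]"
    using assms(4) by (simp add: antipode_eq Y_ge2)
  also have "\<dots> = TS N i u" using v by (simp add: s0_def sm_def hprod_Cons)
  finally show ?thesis by (simp add: TS_def hscale_sc)
qed


end
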